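(* Let $H$ be a separable complex Hilbert space, $(\Omega,\mu)$ a measure space with positive measure, and let $K\in B(H)$ have closed range. Let $F:\Omega\to H$ be a Parseval continuous $K$-frame of $H$ with analysis operator $T$, and let $G:\Omega\to H$ be weakly measurable. Then $G$ is a dual continuous $K$-Bessel sequence of $F$ if and only if there exists $\varphi\in B(H,L^2(\Omega,\mu))$ such that $T^{\ast}\varphi=0$ and $(\varphi f)(\omega)=\langle f,G(\omega)-K^{\dagger}F(\omega)\rangle$ for all $f\in H$ and all $\omega\in\Omega$.
   Context: A map $F:\Omega\to H$ is weakly measurable if $\omega\mapsto\langle f,F(\omega)\rangle$ is measurable for every $f\in H$. A continuous Bessel sequence is a weakly measurable $G$ with $\int_\Omega|\langle f,G(\omega)\rangle|^2\,d\mu(\omega)\le B\|f\|^2$ for all $f\in H$, for some $B>0$. A Parseval continuous $K$-frame is a weakly measurable $F$ with $\int_\Omega|\langle f,F(\omega)\rangle|^2\,d\mu(\omega)=\|K^{\ast}f\|^2$ for all $f\in H$. The analysis operator of $F$ is $T:H\to L^2(\Omega,\mu)$, $Tf=\{\langle f,F(\omega)\rangle\}_{\omega}$, and $T^{\ast}c=\int_\Omega c(\omega)F(\omega)\,d\mu(\omega)$. A dual continuous $K$-Bessel sequence of $F$ is a continuous Bessel sequence $G$ such that $Kf=\int_\Omega\langle f,G(\omega)\rangle F(\omega)\,d\mu(\omega)$ for all $f\in H$. $K^{\dagger}$ denotes the Moore–Penrose pseudo-inverse of the closed-range operator $K$. *)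

theory Defs
  imports "HOL-Analysis.Analysis"
begin

class complex_vector = real_vector +
  fixes scaleC :: "complex \<Rightarrow> 'a \<Rightarrow> 'a" (infixr \<open>*\<^sub>C\<close> 75)
  assumes scaleC_add_right: "a *\<^sub>C (x + y) = a *\<^sub>C x + a *\<^sub>C y"
    and scaleC_add_left: "(a + b) *\<^sub>C x = a *\<^sub>C x + b *\<^sub>C x"
    and scaleC_scaleC: "a *\<^sub>C (b *\<^sub>C x) = (a * b) *\<^sub>C x"
    and scaleC_one: "1 *\<^sub>C x = x"
    and scaleR_scaleC: "scaleR r = scaleC (complex_of_real r)"

class complex_normed_vector = complex_vector + real_normed_vector +
  assumes norm_scaleC: "norm (a *\<^sub>C x) = cmod a * norm x"

class complex_inner = complex_normed_vector +
  fixes cinner :: "'a \<Rightarrow> 'a \<Rightarrow> complex"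
  assumes cinner_commute: "cinner x y = cnj (cinner y x)"
    and cinner_add_left: "cinner (x + y) z = cinner x z + cinner y z"
    and cinner_scaleC_left: "cinner (a *\<^sub>C x) y = a * cinner x y"
    and cinner_self: "cinner x x = complex_of_real ((norm x)\<^sup>2)"

text \<open>Separable complex Hilbert space: complete, second countable (= separable for metric spaces).\<close>
class chilbert_space = complex_inner + complete_space + second_countable_topology

definition bounded_clinear :: "('a::complex_normed_vector \<Rightarrow> 'b::complex_normed_vector) \<Rightarrow> bool" where
  "bounded_clinear A \<longleftrightarrow>
     (\<forall>x y. A (x + y) = A x + A y) \<and> (\<forall>c x. A (c *\<^sub>C x) = c *\<^sub>C A x) \<and>
     (\<exists>C. \<forall>x. norm (A x) \<le> norm x * C)"

definition cadjoint :: "('a::complex_inner \<Rightarrow> 'b::complex_inner) \<Rightarrow> ('b \<Rightarrow> 'a)" where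
  "cadjoint A = (THE B. \<forall>x y. cinner (A x) y = cinner x (B y))"

definition selfadjoint_op :: "('a::complex_inner \<Rightarrow> 'a) \<Rightarrow> bool" where
  "selfadjoint_op A \<longleftrightarrow> (\<forall>x y. cinner (A x) y = cinner x (A y))"

definition mp_pinv :: "('a::chilbert_space \<Rightarrow> 'a) \<Rightarrow> ('a \<Rightarrow> 'a)" where
  "mp_pinv K = (THE B. bounded_clinear B \<and> K \<circ> B \<circ> K = K \<and> B \<circ> K \<circ> B = B \<and>
                       selfadjoint_op (K \<circ> B) \<and> selfadjoint_op (B \<circ> K))"

definition weakly_measurable :: "'a measure \<Rightarrow> ('a \<Rightarrow> 'h::complex_inner) \<Rightarrow> bool" where
  "weakly_measurable M F \<longleftrightarrow> (\<forall>f. (\<lambda>\<omega>. cinner f (F \<omega>)) \<in> borel_measurable M)"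

definition cont_bessel :: "'a measure \<Rightarrow> ('a \<Rightarrow> 'h::complex_inner) \<Rightarrow> bool" where
  "cont_bessel M G \<longleftrightarrow> weakly_measurable M G \<and>
     (\<exists>B>0. \<forall>f. (\<integral>\<^sup>+ \<omega>. ennreal ((cmod (cinner f (G \<omega>)))\<^sup>2) \<partial>M) \<le> ennreal (B * (norm f)\<^sup>2))"

definition parseval_cont_K_frame :: "'a measure \<Rightarrow> ('h::chilbert_space \<Rightarrow> 'h) \<Rightarrow> ('a \<Rightarrow> 'h) \<Rightarrow> bool" where
  "parseval_cont_K_frame M K F \<longleftrightarrow> weakly_measurable M F \<and>
     (\<forall>f. (\<integral>\<^sup>+ \<omega>. ennreal ((cmod (cinner f (F \<omega>)))\<^sup>2) \<partial>M) = ennreal ((norm (cadjoint K f))\<^sup>2))"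

text \<open>Synthesis operator T* c = \<integral> c(\<omega>) F(\<omega>) d\<mu>(\<omega>) (weak integral):
  the vector x with <x,h> = \<integral> c(\<omega>) <F(\<omega>),h> d\<mu> for all h.\<close>
definition synth_op :: "'a measure \<Rightarrow> ('a \<Rightarrow> 'h::chilbert_space) \<Rightarrow> ('a \<Rightarrow> complex) \<Rightarrow> 'h" where
  "synth_op M F c = (THE x. \<forall>h. cinner x h = (\<integral> \<omega>. c \<omega> * cinner (F \<omega>) h \<partial>M))"

definition dual_cont_K_bessel :: "'a measure \<Rightarrow> ('h::chilbert_space \<Rightarrow> 'h) \<Rightarrow> ('a \<Rightarrow> 'h) \<Rightarrow> ('a \<Rightarrow> 'h) \<Rightarrow> bool" where
  "dual_cont_K_bessel M K F G \<longleftrightarrow> cont_bessel M G \<and>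
     (\<forall>f. K f = synth_op M F (\<lambda>\<omega>. cinner f (G \<omega>)))"

text \<open>Bounded linear operators H \<rightarrow> L^2(\<Omega>,\<mu>), with L^2 elements represented by functions
  (linearity holding almost everywhere, i.e. as elements of L^2).\<close>
definition bounded_to_L2 :: "'a measure \<Rightarrow> ('h::complex_normed_vector \<Rightarrow> 'a \<Rightarrow> complex) \<Rightarrow> bool" where
  "bounded_to_L2 M \<phi> \<longleftrightarrow>
     (\<forall>f. \<phi> f \<in> borel_measurable M) \<and>
     (\<forall>f g. AE \<omega> in M. \<phi> (f + g) \<omega> = \<phi> f \<omega> + \<phi> g \<omega>) \<and>
     (\<forall>c f. AE \<omega> in M. \<phi> (c *\<^sub>C f) \<omega> = c * \<phi> f \<omega>) \<and>
     (\<exists>C. \<forall>f. (\<integral>\<^sup>+ \<omega>. ennreal ((cmod (\<phi> f \<omega>))\<^sup>2) \<partial>M) \<le> ennreal ((C * norm f)\<^sup>2))"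

end

theory Submission
  imports Defs
begin

context chilbert_space begin
subclass banach ..
end

lemma scaleC_zero_left[simp]: "(0::complex) *\<^sub>C (x::'a::complex_vector) = 0"
  by (metis scaleR_zero_left scaleR_scaleC of_real_0)

lemma scaleC_minus1_left[simp]: "(-1::complex) *\<^sub>C (x::'a::complex_vector) = - x"
  by (metis scaleR_minus1_left scaleR_scaleC of_real_1 of_real_minus)

lemma scaleC_zero_right[simp]: "(a::complex) *\<^sub>C (0::'a::complex_vector) = 0"
proof -
  have "a *\<^sub>C (0::'a) = a *\<^sub>C 0 + a *\<^sub>C 0" by (metis add_0 scaleC_add_right)
  then show ?thesis by simp
qed

lemma scaleC_minus_right: "(a::complex) *\<^sub>C (- x::'a::complex_vector) = - (a *\<^sub>C x)"
proof -
  have "a *\<^sub>C (- x) + a *\<^sub>C x = 0" by (metis scaleC_add_right add.left_inverse scaleC_zero_right)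
  then show ?thesis by (simp add: eq_neg_iff_add_eq_0)
qed

lemma scaleC_diff_right: "(a::complex) *\<^sub>C (x - y::'a::complex_vector) = a *\<^sub>C x - a *\<^sub>C y"
  by (metis diff_conv_add_uminus scaleC_add_right scaleC_minus_right)

lemma scaleC_minus_left: "(- a::complex) *\<^sub>C (x::'a::complex_vector) = - (a *\<^sub>C x)"
  by (metis mult_minus1 scaleC_scaleC scaleC_minus1_left)

lemma scaleC_diff_left: "(a - b::complex) *\<^sub>C (x::'a::complex_vector) = a *\<^sub>C x - b *\<^sub>C x"
  by (metis diff_conv_add_uminus scaleC_add_left scaleC_minus_left)

lemma scaleR_as_scaleC: "r *\<^sub>R (x::'a::complex_vector) = complex_of_real r *\<^sub>C x"
  by (simp add: scaleR_scaleC)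

lemma cinner_zero_left[simp]: "cinner 0 (y::'a::complex_inner) = 0"
  by (metis cinner_scaleC_left mult_zero_left scaleC_zero_left)

lemma cinner_zero_right[simp]: "cinner (y::'a::complex_inner) 0 = 0"
  by (metis cinner_commute cinner_zero_left complex_cnj_zero)

lemma cinner_add_right: "cinner (z::'a::complex_inner) (x + y) = cinner z x + cinner z y"
  by (metis cinner_commute cinner_add_left complex_cnj_add)

lemma cinner_scaleC_right: "cinner (x::'a::complex_inner) (a *\<^sub>C y) = cnj a * cinner x y"
  by (metis cinner_commute cinner_scaleC_left complex_cnj_mult)

lemma cinner_minus_left: "cinner (- x::'a::complex_inner) y = - cinner x y"
  by (metis cinner_scaleC_left scaleC_minus1_left mult_minus1)

lemma cinner_minus_right: "cinner (x::'a::complex_inner) (- y) = - cinner x y"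
  by (metis cinner_commute cinner_minus_left complex_cnj_minus)

lemma cinner_diff_left: "cinner (x - y::'a::complex_inner) z = cinner x z - cinner y z"
  by (metis diff_conv_add_uminus cinner_add_left cinner_minus_left)

lemma cinner_diff_right: "cinner (z::'a::complex_inner) (x - y) = cinner z x - cinner z y"
  by (metis diff_conv_add_uminus cinner_add_right cinner_minus_right)

lemma cinner_scaleR_left: "cinner (r *\<^sub>R x::'a::complex_inner) y = complex_of_real r * cinner x y"
  by (simp add: scaleR_scaleC cinner_scaleC_left)

lemma cinner_scaleR_right: "cinner (x::'a::complex_inner) (r *\<^sub>R y) = complex_of_real r * cinner x y"
  by (simp add: scaleR_scaleC cinner_scaleC_right)

lemma cinner_self_Re: "Re (cinner (x::'a::complex_inner) x) = (norm x)\<^sup>2"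
  by (simp add: cinner_self)

lemma cinner_self_eq_0: "cinner (x::'a::complex_inner) x = 0 \<longleftrightarrow> x = 0"
  by (simp add: cinner_self)

lemma cinner_ext_zero: "(\<And>h. cinner (x::'a::complex_inner) h = 0) \<Longrightarrow> x = 0"
  using cinner_self_eq_0 by blast

lemma cinner_ext: "(\<And>h. cinner (x::'a::complex_inner) h = cinner y h) \<Longrightarrow> x = y"
  using cinner_ext_zero[of "x - y"] by (simp add: cinner_diff_left)

lemma cinner_cnj_self: "cinner y (x::'a::complex_inner) = cnj (cinner x y)"
  by (rule cinner_commute)

lemma norm_diff_sq: "(norm (x - y::'a::complex_inner))\<^sup>2 = (norm x)\<^sup>2 + (norm y)\<^sup>2 - 2 * Re (cinner x y)"
proof -
  have "cinner (x - y) (x - y) = cinner x x - cinner x y - cinner y x + cinner y y"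
    by (simp add: cinner_diff_left cinner_diff_right)
  then have "(norm (x - y))\<^sup>2 = Re (cinner x x - cinner x y - cinner y x + cinner y y)"
    by (metis cinner_self_Re)
  then show ?thesis by (simp add: cinner_self_Re cinner_commute[of y x])
qed

lemma norm_add_sq: "(norm (x + y::'a::complex_inner))\<^sup>2 = (norm x)\<^sup>2 + (norm y)\<^sup>2 + 2 * Re (cinner x y)"
  using norm_diff_sq[of x "- y"] by (simp add: cinner_minus_right)

lemma cauchy_schwarz: "cmod (cinner (x::'a::complex_inner) y) \<le> norm x * norm y"
proof (cases "y = 0")
  case True then show ?thesis by simp
next
  case False
  define n where "n = (norm y)\<^sup>2"
  have n: "n > 0" using False by (simp add: n_def)
  define a where "a = cinner x y"
  define c where "c = a / complex_of_real n"
  have "0 \<le> (norm (x - c *\<^sub>C y))\<^sup>2" by simp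
  also have "\<dots> = (norm x)\<^sup>2 + (cmod c)\<^sup>2 * n - 2 * Re (cnj c * a)"
    by (simp add: norm_diff_sq norm_scaleC cinner_scaleC_right power_mult_distrib n_def a_def)
  also have "cnj c * a = complex_of_real ((cmod a)\<^sup>2 / n)"
  proof -
    have "a * cnj a = complex_of_real ((cmod a)\<^sup>2)" by (rule complex_norm_square[symmetric])
    then show ?thesis by (simp add: c_def mult.commute)
  qed
  also have "(cmod c)\<^sup>2 = (cmod a)\<^sup>2 / n\<^sup>2"
    by (simp add: c_def norm_divide power_divide abs_of_pos n)
  finally have "0 \<le> (norm x)\<^sup>2 - (cmod a)\<^sup>2 / n"
    using n by (simp add: power2_eq_square)
  then have "(cmod a)\<^sup>2 \<le> (norm x)\<^sup>2 * n" using n by (simp add: field_simps)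
  then have "(cmod a)\<^sup>2 \<le> (norm x * norm y)\<^sup>2" by (simp add: n_def power_mult_distrib)
  then show ?thesis unfolding a_def
    by (meson mult_nonneg_nonneg norm_ge_zero power2_le_imp_le)
qed

lemma bcl_add: "bounded_clinear A \<Longrightarrow> A (x + y) = A x + A y"
  by (simp add: bounded_clinear_def)
lemma bcl_scaleC: "bounded_clinear A \<Longrightarrow> A (c *\<^sub>C x) = c *\<^sub>C A x"
  by (simp add: bounded_clinear_def)
lemma bcl_bound: "bounded_clinear A \<Longrightarrow> \<exists>C>0. \<forall>x. norm (A x) \<le> norm x * C"
proof -
  assume "bounded_clinear A"
  then obtain C where C: "\<forall>x. norm (A x) \<le> norm x * C" by (auto simp: bounded_clinear_def)
  have "\<forall>x. norm (A x) \<le> norm x * (max C 1)"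
    by (metis C max.cobounded1 mult_left_mono norm_ge_zero order_trans)
  then show ?thesis by (metis max.cobounded2 zero_less_one order_less_le_trans)
qed
lemma bcl_bounded_linear: "bounded_clinear A \<Longrightarrow> bounded_linear A"
proof -
  assume a: "bounded_clinear A"
  then obtain C where C: "\<forall>x. norm (A x) \<le> norm x * C" using bcl_bound by blast
  show ?thesis
    by (rule bounded_linear_intro[where K=C]) (auto simp: bcl_add[OF a] scaleR_scaleC bcl_scaleC[OF a] C)
qed

definition csubspace :: "'a::complex_vector set \<Rightarrow> bool" where
  "csubspace S \<longleftrightarrow> 0 \<in> S \<and> (\<forall>x\<in>S. \<forall>y\<in>S. x + y \<in> S) \<and> (\<forall>c. \<forall>x\<in>S. c *\<^sub>C x \<in> S)"

lemma csubspace_0: "csubspace S \<Longrightarrow> 0 \<in> S" by (simp add: csubspace_def)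
lemma csubspace_add: "csubspace S \<Longrightarrow> x \<in> S \<Longrightarrow> y \<in> S \<Longrightarrow> x + y \<in> S" by (simp add: csubspace_def)
lemma csubspace_scaleC: "csubspace S \<Longrightarrow> x \<in> S \<Longrightarrow> c *\<^sub>C x \<in> S" by (simp add: csubspace_def)
lemma csubspace_scaleR: "csubspace S \<Longrightarrow> x \<in> S \<Longrightarrow> r *\<^sub>R x \<in> S" by (simp add: csubspace_def scaleR_scaleC)
lemma csubspace_minus: "csubspace S \<Longrightarrow> x \<in> S \<Longrightarrow> - x \<in> S"
  by (metis csubspace_scaleC scaleC_minus1_left)
lemma csubspace_diff: "csubspace S \<Longrightarrow> x \<in> S \<Longrightarrow> y \<in> S \<Longrightarrow> x - y \<in> S"
  by (metis csubspace_add csubspace_minus diff_conv_add_uminus)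

lemma parallelogram: "(norm (u + v::'a::complex_inner))\<^sup>2 + (norm (u - v))\<^sup>2 = 2 * (norm u)\<^sup>2 + 2 * (norm v)\<^sup>2"
  by (simp add: norm_add_sq norm_diff_sq)

lemma proj_exists:
  fixes x :: "'a::chilbert_space"
  assumes S: "csubspace S" "closed S"
  shows "\<exists>p\<in>S. \<forall>s\<in>S. cinner (x - p) s = 0"
proof -
  define d where "d = infdist x S"
  have Sne: "S \<noteq> {}" using csubspace_0[OF S(1)] by auto
  have d0: "d \<ge> 0" by (simp add: d_def infdist_nonneg)
  have dle: "d \<le> norm (x - s)" if "s \<in> S" for s
    using infdist_le[OF that, of x] by (simp add: d_def dist_norm)
  have approx: "\<exists>s\<in>S. norm (x - s) < d + e" if "e > 0" for e
  proof (rule ccontr)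
    assume "\<not> ?thesis"
    then have "\<forall>s\<in>S. d + e \<le> dist x s" by (auto simp: dist_norm not_less)
    then have "d + e \<le> infdist x S"
      unfolding infdist_notempty[OF Sne] by (intro cINF_greatest Sne) auto
    then show False using that by (simp add: d_def)
  qed
  define e :: "nat \<Rightarrow> real" where "e n = inverse (real (Suc n))" for n
  have epos: "e n > 0" for n by (simp add: e_def)
  have ele1: "e n \<le> 1" for n by (simp add: e_def inverse_le_1_iff)
  have "\<forall>n. \<exists>s\<in>S. norm (x - s) < d + e n" using approx epos by blast
  then obtain s where s: "\<And>n. s n \<in> S" "\<And>n. norm (x - s n) < d + e n" by metis
  have par: "(norm (a - b))\<^sup>2 \<le> 2 * (norm (x - a))\<^sup>2 + 2 * (norm (x - b))\<^sup>2 - 4 * d\<^sup>2"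
    if "a \<in> S" "b \<in> S" for a b
  proof -
    define m where "m = (1/2) *\<^sub>R (a + b)"
    have mS: "m \<in> S" unfolding m_def by (intro csubspace_scaleR csubspace_add S that)
    have "(x - a) + (x - b) = 2 *\<^sub>R (x - m)" by (simp add: m_def algebra_simps scaleR_2)
    then have n2: "norm ((x - a) + (x - b)) = 2 * norm (x - m)" by simp
    have "2 * d \<le> 2 * norm (x - m)" using dle[OF mS] by simp
    then have "(2 * d)\<^sup>2 \<le> (norm ((x - a) + (x - b)))\<^sup>2" using d0 n2 by (simp add: power_mono)
    moreover have "(x - a) - (x - b) = b - a" by simp
    moreover have "norm (b - a) = norm (a - b)" by (simp add: norm_minus_commute)
    ultimately show ?thesis using parallelogram[of "x - a" "x - b"] by (simp add: power_mult_distrib)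
  qed
  have sq: "(norm (x - s n))\<^sup>2 \<le> d\<^sup>2 + (2 * d + 1) * e n" for n
  proof -
    have "(norm (x - s n))\<^sup>2 \<le> (d + e n)\<^sup>2" using s(2)[of n] by (simp add: power_mono)
    also have "\<dots> = d\<^sup>2 + 2 * d * e n + e n * e n" by (simp add: power2_eq_square algebra_simps)
    also have "e n * e n \<le> e n" using ele1[of n] epos[of n] by (simp add: mult_le_cancel_right1)
    finally show ?thesis by (simp add: algebra_simps)
  qed
  have cb: "(norm (s m - s n))\<^sup>2 \<le> 2 * (2 * d + 1) * (e m + e n)" for m n
    using par[OF s(1) s(1), of m n] sq[of m] sq[of n] by (simp add: algebra_simps)
  have "Cauchy s"
  proof (rule metric_CauchyI)
    fix \<epsilon> :: real assume "\<epsilon> > 0"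
    then have "\<epsilon>\<^sup>2 / (4 * (2 * d + 1)) > 0" using d0 by simp
    then obtain N where N: "inverse (real (Suc N)) < \<epsilon>\<^sup>2 / (4 * (2 * d + 1))"
      using reals_Archimedean by blast
    show "\<exists>M. \<forall>m\<ge>M. \<forall>n\<ge>M. dist (s m) (s n) < \<epsilon>"
    proof (intro exI allI impI)
      fix m n assume mn: "N \<le> m" "N \<le> n"
      have "e m \<le> inverse (real (Suc N))" "e n \<le> inverse (real (Suc N))"
        using mn by (auto simp: e_def intro!: le_imp_inverse_le)
      then have "e m + e n \<le> 2 * inverse (real (Suc N))" by linarith
      also have "\<dots> < 2 * (\<epsilon>\<^sup>2 / (4 * (2 * d + 1)))" using N by linarith
      also have "\<dots> = \<epsilon>\<^sup>2 / (2 * (2 * d + 1))" using d0 by (simp add: field_simps)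
      finally have "e m + e n < \<epsilon>\<^sup>2 / (2 * (2 * d + 1))" .
      then have "2 * (2 * d + 1) * (e m + e n) < \<epsilon>\<^sup>2" using d0 by (simp add: field_simps)
      then have "(norm (s m - s n))\<^sup>2 < \<epsilon>\<^sup>2" using cb[of m n] by linarith
      then show "dist (s m) (s n) < \<epsilon>" using \<open>\<epsilon> > 0\<close>
        by (simp add: dist_norm power_less_imp_less_base)
    qed
  qed
  then obtain p where p: "s \<longlonglongrightarrow> p" using Cauchy_convergent_iff convergent_def by blast
  have pS: "p \<in> S" using closed_sequentially[OF S(2) _ p] s(1) by blast
  have "(\<lambda>n. norm (x - s n)) \<longlonglongrightarrow> norm (x - p)" by (intro tendsto_intros p)
  moreover have "(\<lambda>n. d + e n) \<longlonglongrightarrow> d + 0"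
    unfolding e_def by (intro tendsto_intros LIMSEQ_inverse_real_of_nat)
  ultimately have pd: "norm (x - p) \<le> d"
    using s(2) by (intro LIMSEQ_le[of "\<lambda>n. norm (x - s n)" _ "\<lambda>n. d + e n"]) (auto intro: less_imp_le)
  have orth: "cinner (x - p) t = 0" if tS: "t \<in> S" for t
  proof -
    define w where "w = x - p"
    define a where "a = cinner w t"
    define r where "r = inverse ((norm t)\<^sup>2 + 1)"
    have r0: "r > 0" unfolding r_def by (simp add: add_nonneg_pos)
    define c where "c = complex_of_real r * a"
    have "p + c *\<^sub>C t \<in> S" by (intro csubspace_add csubspace_scaleC S pS tS)
    then have "norm w \<le> norm (w - c *\<^sub>C t)"
      using pd dle by (fastforce simp: w_def algebra_simps)
    then have "(norm w)\<^sup>2 \<le> (norm (w - c *\<^sub>C t))\<^sup>2" by (simp add: power_mono)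
    also have "\<dots> = (norm w)\<^sup>2 + (cmod c)\<^sup>2 * (norm t)\<^sup>2 - 2 * Re (cnj c * a)"
      by (simp add: norm_diff_sq norm_scaleC cinner_scaleC_right power_mult_distrib a_def)
    also have "cnj c * a = complex_of_real (r * (cmod a)\<^sup>2)"
    proof -
      have "cnj a * a = complex_of_real ((cmod a)\<^sup>2)" by (metis complex_norm_square mult.commute)
      then show ?thesis by (simp add: c_def mult.assoc)
    qed
    also have "(cmod c)\<^sup>2 = r\<^sup>2 * (cmod a)\<^sup>2" using r0 by (simp add: c_def norm_mult power_mult_distrib)
    finally have "2 * r * (cmod a)\<^sup>2 \<le> r\<^sup>2 * (cmod a)\<^sup>2 * (norm t)\<^sup>2" by simp
    then have "r * (2 * (cmod a)\<^sup>2) \<le> r * (r * (norm t)\<^sup>2 * (cmod a)\<^sup>2)"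
      by (simp add: power2_eq_square mult_ac)
    then have "2 * (cmod a)\<^sup>2 \<le> r * (norm t)\<^sup>2 * (cmod a)\<^sup>2"
      using mult_le_cancel_left_pos[OF r0] by blast
    moreover have "r * (norm t)\<^sup>2 \<le> 1"
    proof -
      have "(norm t)\<^sup>2 \<le> (norm t)\<^sup>2 + 1" by simp
      moreover have "(norm t)\<^sup>2 + 1 > 0" by (simp add: add_nonneg_pos)
      ultimately show ?thesis unfolding r_def by (simp add: field_simps)
    qed
    moreover have "r * (norm t)\<^sup>2 * (cmod a)\<^sup>2 \<le> (cmod a)\<^sup>2"
      using mult_left_le_one_le[of "(cmod a)\<^sup>2" "r * (norm t)\<^sup>2"] r0 \<open>r * (norm t)\<^sup>2 \<le> 1\<close>
      by simp
    ultimately have "2 * (cmod a)\<^sup>2 \<le> (cmod a)\<^sup>2" by linarith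
    then have "a = 0" by simp
    then show ?thesis by (simp add: a_def w_def)
  qed
  show ?thesis using pS orth by blast
qed

definition proj :: "'a::chilbert_space set \<Rightarrow> 'a \<Rightarrow> 'a" where
  "proj S x = (SOME p. p \<in> S \<and> (\<forall>s\<in>S. cinner (x - p) s = 0))"

lemma proj_spec:
  assumes "csubspace S" "closed S"
  shows "proj S x \<in> S \<and> (\<forall>s\<in>S. cinner (x - proj S x) s = 0)"
  unfolding proj_def by (rule someI_ex) (use proj_exists[OF assms, of x] in blast)

lemma proj_in: "csubspace S \<Longrightarrow> closed S \<Longrightarrow> proj S x \<in> S"
  using proj_spec by blast
lemma proj_orth: "csubspace S \<Longrightarrow> closed S \<Longrightarrow> s \<in> S \<Longrightarrow> cinner (x - proj S x) s = 0"
  using proj_spec by blast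

lemma proj_unique:
  assumes S: "csubspace S" "closed S" and p: "p \<in> S" "\<forall>s\<in>S. cinner (x - p) s = 0"
  shows "proj S x = p"
proof -
  define q where "q = proj S x"
  have q: "q \<in> S" "\<forall>s\<in>S. cinner (x - q) s = 0" using proj_spec[OF S, of x] by (auto simp: q_def)
  have pq: "p - q \<in> S" using S p q csubspace_diff by blast
  have "cinner (p - q) (p - q) = cinner ((x - q) - (x - p)) (p - q)" by simp
  also have "\<dots> = 0" using p q pq by (simp add: cinner_diff_left)
  finally have "p - q = 0" by (simp only: cinner_self_eq_0)
  then show ?thesis by (simp add: q_def)
qed

lemma proj_id: "csubspace S \<Longrightarrow> closed S \<Longrightarrow> x \<in> S \<Longrightarrow> proj S x = x"
  by (rule proj_unique) auto

lemma proj_orth_zero: "csubspace S \<Longrightarrow> closed S \<Longrightarrow> (\<forall>s\<in>S. cinner x s = 0) \<Longrightarrow> proj S x = 0"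
  by (rule proj_unique) (auto simp: csubspace_0)

lemma proj_add:
  assumes S: "csubspace S" "closed S"
  shows "proj S (x + y) = proj S x + proj S y"
proof (rule proj_unique[OF S])
  show "proj S x + proj S y \<in> S" using S csubspace_add proj_in by blast
  show "\<forall>s\<in>S. cinner (x + y - (proj S x + proj S y)) s = 0"
  proof
    fix s assume "s \<in> S"
    have e: "x + y - (proj S x + proj S y) = (x - proj S x) + (y - proj S y)" by simp
    show "cinner (x + y - (proj S x + proj S y)) s = 0"
      unfolding e cinner_add_left using proj_orth[OF S \<open>s \<in> S\<close>] by simp
  qed
qed

lemma proj_scaleC:
  assumes S: "csubspace S" "closed S"
  shows "proj S (c *\<^sub>C x) = c *\<^sub>C proj S x"
proof (rule proj_unique[OF S])
  show "c *\<^sub>C proj S x \<in> S" using S csubspace_scaleC proj_in by blast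
  show "\<forall>s\<in>S. cinner (c *\<^sub>C x - c *\<^sub>C proj S x) s = 0"
  proof
    fix s assume "s \<in> S"
    have e: "c *\<^sub>C x - c *\<^sub>C proj S x = c *\<^sub>C (x - proj S x)" by (simp add: scaleC_diff_right)
    show "cinner (c *\<^sub>C x - c *\<^sub>C proj S x) s = 0"
      unfolding e cinner_scaleC_left using proj_orth[OF S \<open>s \<in> S\<close>] by simp
  qed
qed

lemma proj_orth': "csubspace S \<Longrightarrow> closed S \<Longrightarrow> s \<in> S \<Longrightarrow> cinner s (x - proj S x) = 0"
  by (metis cinner_commute complex_cnj_zero proj_orth)

lemma proj_selfadj:
  assumes S: "csubspace S" "closed S"
  shows "cinner (proj S x) y = cinner x (proj S y)"
proof -
  have "cinner (proj S x) y = cinner (proj S x) (proj S y) + cinner (proj S x) (y - proj S y)"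
    by (simp add: cinner_diff_right)
  also have "cinner (proj S x) (y - proj S y) = 0" using proj_orth'[OF S proj_in[OF S]] by blast
  also have "cinner x (proj S y) = cinner (proj S x) (proj S y) + cinner (x - proj S x) (proj S y)"
    by (simp add: cinner_diff_left)
  moreover have "cinner (x - proj S x) (proj S y) = 0" using proj_orth[OF S proj_in[OF S]] by blast
  ultimately show ?thesis by simp
qed

lemma compl_selfadj:
  assumes S: "csubspace S" "closed S"
  shows "cinner (x - proj S x) y = cinner x (y - proj S y)"
  by (simp add: cinner_diff_left cinner_diff_right proj_selfadj[OF S])

lemma proj_pyth:
  assumes S: "csubspace S" "closed S"
  shows "(norm x)\<^sup>2 = (norm (proj S x))\<^sup>2 + (norm (x - proj S x))\<^sup>2"
proof -
  have "x = proj S x + (x - proj S x)" by simp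
  then have "(norm x)\<^sup>2 = (norm (proj S x))\<^sup>2 + (norm (x - proj S x))\<^sup>2 + 2 * Re (cinner (proj S x) (x - proj S x))"
    by (metis norm_add_sq)
  moreover have "cinner (proj S x) (x - proj S x) = 0" using proj_orth'[OF S proj_in[OF S]] by blast
  ultimately show ?thesis by simp
qed

lemma proj_norm: "csubspace S \<Longrightarrow> closed S \<Longrightarrow> norm (proj S x) \<le> norm x"
proof -
  assume a: "csubspace S" "closed S"
  have "(norm (proj S x))\<^sup>2 \<le> (norm x)\<^sup>2" using proj_pyth[OF a, of x] by simp
  then show ?thesis by (rule power2_le_imp_le) simp
qed

lemma compl_norm: "csubspace S \<Longrightarrow> closed S \<Longrightarrow> norm (x - proj S x) \<le> norm x"
proof -
  assume a: "csubspace S" "closed S"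
  have "(norm (x - proj S x))\<^sup>2 \<le> (norm x)\<^sup>2" using proj_pyth[OF a, of x] by simp
  then show ?thesis by (rule power2_le_imp_le) simp
qed

lemma cinner_ext_right: "(\<And>h. cinner h (x::'a::complex_inner) = cinner h y) \<Longrightarrow> x = y"
  by (rule cinner_ext) (metis cinner_commute)

lemma riesz:
  fixes L :: "'a::chilbert_space \<Rightarrow> complex"
  assumes add: "\<And>x y. L (x + y) = L x + L y" and sc: "\<And>c x. L (c *\<^sub>C x) = c * L x"
    and bd: "\<And>x. cmod (L x) \<le> norm x * C"
  shows "\<exists>z. \<forall>x. L x = cinner x z"
proof -
  have bl: "bounded_linear L"
    by (rule bounded_linear_intro[where K=C]) (auto simp: add scaleR_scaleC sc bd scaleR_conv_of_real)
  define N where "N = {x. L x = 0}"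
  have L0: "L 0 = 0" using sc[of 0 0] by simp
  have cN: "csubspace N" by (auto simp: csubspace_def N_def add sc L0)
  have clN: "closed N" unfolding N_def
    by (intro closed_Collect_eq continuous_on_const linear_continuous_on bl)
  show ?thesis
  proof (cases "\<forall>x. L x = 0")
    case True then show ?thesis by (intro exI[of _ 0]) simp
  next
    case False
    then obtain u where u: "L u \<noteq> 0" by blast
    define w where "w = u - proj N u"
    have "L (proj N u) = 0" using proj_in[OF cN clN] by (simp add: N_def)
    then have Lw: "L w = L u" unfolding w_def using add[of "u - proj N u" "proj N u"] by simp
    have wN: "cinner w s = 0" if "s \<in> N" for s using proj_orth[OF cN clN that] by (simp add: w_def)
    have w0: "w \<noteq> 0" using Lw u L0 by auto
    have ww: "cinner w w \<noteq> 0" using w0 cinner_self_eq_0 by blast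
    define z where "z = (cnj (L w) / cnj (cinner w w)) *\<^sub>C w"
    have "L x = cinner x z" for x
    proof -
      define y where "y = x - (L x / L w) *\<^sub>C w"
      have "x = y + (L x / L w) *\<^sub>C w" by (simp add: y_def)
      then have "L x = L y + (L x / L w) * L w" by (metis add sc)
      then have "L y = 0" using Lw u by simp
      then have "cinner w y = 0" using wN by (simp add: N_def)
      then have "cinner y w = 0" by (metis cinner_commute complex_cnj_zero)
      then have "cinner x w = (L x / L w) * cinner w w"
        by (simp add: y_def cinner_diff_left cinner_scaleC_left)
      then show ?thesis using ww Lw u by (simp add: z_def cinner_scaleC_right)
    qed
    then show ?thesis by blast
  qed
qed

lemma adjoint_exists:
  fixes A :: "'a::chilbert_space \<Rightarrow> 'b::complex_inner"
  assumes A: "bounded_clinear A"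
  shows "\<exists>!B. \<forall>x y. cinner (A x) y = cinner x (B y)"
proof -
  obtain C where C: "C > 0" "\<forall>x. norm (A x) \<le> norm x * C" using bcl_bound[OF A] by blast
  have "\<exists>z. \<forall>x. cinner (A x) y = cinner x z" for y
  proof (rule riesz)
    show "cinner (A (x1 + x2)) y = cinner (A x1) y + cinner (A x2) y" for x1 x2
      by (simp add: bcl_add[OF A] cinner_add_left)
    show "cinner (A (c *\<^sub>C x)) y = c * cinner (A x) y" for c x
      by (simp add: bcl_scaleC[OF A] cinner_scaleC_left)
    show "cmod (cinner (A x) y) \<le> norm x * (C * norm y)" for x
    proof -
      have "cmod (cinner (A x) y) \<le> norm (A x) * norm y" by (rule cauchy_schwarz)
      also have "\<dots> \<le> norm x * C * norm y" using C by (simp add: mult_right_mono)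
      finally show ?thesis by (simp add: mult.assoc)
    qed
  qed
  then obtain B where "\<forall>y x. cinner (A x) y = cinner x (B y)" by metis
  moreover have "B1 = B2" if "\<forall>x y. cinner (A x) y = cinner x (B1 y)" "\<forall>x y. cinner (A x) y = cinner x (B2 y)" for B1 B2
    using that by (intro ext cinner_ext_right) metis
  ultimately show ?thesis by blast
qed

lemma cadjoint_prop:
  fixes A :: "'a::chilbert_space \<Rightarrow> 'b::complex_inner"
  assumes A: "bounded_clinear A"
  shows "cinner (A x) y = cinner x (cadjoint A y)"
  using theI'[OF adjoint_exists[OF A]] unfolding cadjoint_def by blast

lemma cadjoint_prop':
  fixes A :: "'a::chilbert_space \<Rightarrow> 'b::complex_inner"
  assumes A: "bounded_clinear A"
  shows "cinner (cadjoint A y) x = cinner y (A x)"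
  by (metis cadjoint_prop[OF A] cinner_commute)

lemma cadjoint_bcl:
  fixes A :: "'a::chilbert_space \<Rightarrow> 'b::complex_inner"
  assumes A: "bounded_clinear A"
  shows "bounded_clinear (cadjoint A)"
proof -
  obtain C where C: "C > 0" "\<forall>x. norm (A x) \<le> norm x * C" using bcl_bound[OF A] by blast
  let ?B = "cadjoint A"
  have h1: "?B (x + y) = ?B x + ?B y" for x y
    by (rule cinner_ext_right) (simp add: cadjoint_prop[OF A, symmetric] cinner_add_right)
  have h2: "?B (c *\<^sub>C x) = c *\<^sub>C ?B x" for c x
    by (rule cinner_ext_right) (simp add: cadjoint_prop[OF A, symmetric] cinner_scaleC_right)
  have h3: "norm (?B y) \<le> norm y * C" for y
  proof -
    have "(norm (?B y))\<^sup>2 = Re (cinner (?B y) (?B y))" by (simp add: cinner_self_Re)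
    also have "\<dots> = Re (cinner (A (?B y)) y)" by (simp add: cadjoint_prop[OF A])
    also have "\<dots> \<le> cmod (cinner (A (?B y)) y)" by (rule complex_Re_le_cmod)
    also have "\<dots> \<le> norm (A (?B y)) * norm y" by (rule cauchy_schwarz)
    also have "\<dots> \<le> norm (?B y) * C * norm y" using C by (simp add: mult_right_mono)
    finally have *: "norm (?B y) * norm (?B y) \<le> norm (?B y) * (norm y * C)"
      by (simp add: power2_eq_square mult_ac)
    show ?thesis
    proof (cases "?B y = 0")
      case True then show ?thesis using C by simp
    next
      case False then show ?thesis using * by simp
    qed
  qed
  show ?thesis unfolding bounded_clinear_def
    by (intro conjI allI exI[of _ C] h1 h2 h3)
qed

lemma open_mapping_step1:
  fixes K :: "'a::chilbert_space \<Rightarrow> 'b::chilbert_space"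
  assumes K: "bounded_clinear K" and cl: "closed (range K)"
  shows "\<exists>n r. r > 0 \<and> (\<forall>y\<in>range K. norm y < r \<longrightarrow> (\<forall>e>0. \<exists>x. norm x \<le> 2 * real n \<and> norm (K x - y) < e))"
proof -
  interpret bl: bounded_linear K by (rule bcl_bounded_linear[OF K])
  define R where "R = range K"
  define X where "X = top_of_set R"
  have cm: "completely_metrizable_space X"
    unfolding X_def
    by (rule completely_metrizable_space_closedin[OF completely_metrizable_space_euclidean])
       (simp add: R_def cl)
  define Cn where "Cn n = R \<inter> closure (K ` cball 0 (real n))" for n
  have "\<exists>n. X interior_of Cn n \<noteq> {}"
  proof (rule ccontr)
    assume "\<not> ?thesis"
    then have e: "\<And>n. X interior_of Cn n = {}" by blast
    have "X interior_of \<Union>(range Cn) = {}"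
    proof (rule Baire_category_alt)
      show "completely_metrizable_space X \<or> locally_compact_space X \<and> regular_space X" using cm by blast
      show "countable (range Cn)" by simp
      fix T assume "T \<in> range Cn"
      then obtain n where "T = Cn n" by blast
      moreover have "closedin X (Cn n)" unfolding X_def Cn_def by (rule closedin_closed_Int) simp
      ultimately show "closedin X T \<and> X interior_of T = {}" using e by simp
    qed
    moreover have "\<Union>(range Cn) = topspace X"
    proof
      show "\<Union>(range Cn) \<subseteq> topspace X" by (auto simp: X_def Cn_def)
      show "topspace X \<subseteq> \<Union>(range Cn)"
      proof
        fix y assume "y \<in> topspace X"
        then obtain x where y: "y = K x" by (auto simp: X_def R_def)
        obtain n where "norm x \<le> real n" using real_arch_simple by blast
        then have "y \<in> K ` cball 0 (real n)" using y by auto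
        then have "y \<in> Cn n" using y by (auto simp: Cn_def R_def intro: closure_subset[THEN subsetD])
        then show "y \<in> \<Union>(range Cn)" by blast
      qed
    qed
    moreover have "topspace X \<noteq> {}" by (auto simp: X_def R_def)
    ultimately show False by simp
  qed
  then obtain n y0 where "y0 \<in> X interior_of Cn n" by blast
  then obtain T where T: "openin X T" "y0 \<in> T" "T \<subseteq> Cn n" by (auto simp: interior_of_def)
  then obtain V where V: "open V" "T = R \<inter> V" unfolding X_def by (auto simp: openin_open)
  then obtain r where r: "r > 0" "ball y0 r \<subseteq> V" using T(2) open_contains_ball by blast
  have y0R: "y0 \<in> R" using T V by blast
  have inC: "y \<in> closure (K ` cball 0 (real n))" if "y \<in> R" "dist y0 y < r" for y
  proof -
    have "y \<in> V" using r(2) that(2) by auto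
    then have "y \<in> T" using V(2) that(1) by blast
    then show ?thesis using T(3) by (auto simp: Cn_def)
  qed
  have "\<forall>y\<in>range K. norm y < r \<longrightarrow> (\<forall>e>0. \<exists>x. norm x \<le> 2 * real n \<and> norm (K x - y) < e)"
  proof (intro ballI impI allI)
    fix y e assume yR: "y \<in> range K" and ny: "norm y < r" and e: "(e::real) > 0"
    then obtain xa where xa: "y = K xa" by blast
    obtain xb where xb: "y0 = K xb" using y0R R_def by blast
    have "y0 + y \<in> R" using xa xb by (auto simp: R_def bl.add[symmetric])
    moreover have "dist y0 (y0 + y) < r" using ny by (simp add: dist_norm)
    ultimately have "y0 + y \<in> closure (K ` cball 0 (real n))" by (rule inC)
    then have "\<forall>e>0. \<exists>a\<in>K ` cball 0 (real n). dist a (y0 + y) < e" by (simp only: closure_approachable)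
    moreover have e2: "e / 2 > 0" using e by simp
    ultimately obtain a where a: "a \<in> K ` cball 0 (real n)" "dist a (y0 + y) < e / 2" by blast
    have "y0 \<in> closure (K ` cball 0 (real n))" using y0R r by (intro inC) auto
    then have "\<forall>e>0. \<exists>b\<in>K ` cball 0 (real n). dist b y0 < e" by (simp only: closure_approachable)
    then obtain b where b: "b \<in> K ` cball 0 (real n)" "dist b y0 < e / 2" using e2 by blast
    obtain x1 where x1: "a = K x1" "norm x1 \<le> real n" using a(1) by auto
    obtain x2 where x2: "b = K x2" "norm x2 \<le> real n" using b(1) by auto
    have "norm (x1 - x2) \<le> norm x1 + norm x2" by (rule norm_triangle_ineq4)
    then have nx: "norm (x1 - x2) \<le> 2 * real n" using x1 x2 by linarith
    have "K (x1 - x2) - y = (a - (y0 + y)) - (b - y0)" using x1 x2 by (simp add: bl.diff)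
    then have "norm (K (x1 - x2) - y) \<le> norm (a - (y0 + y)) + norm (b - y0)"
      by (simp only: norm_triangle_ineq4)
    also have "\<dots> < e" using a(2) b(2) by (simp add: dist_norm)
    finally show "\<exists>x. norm x \<le> 2 * real n \<and> norm (K x - y) < e" using nx by blast
  qed
  then show ?thesis using r by blast
qed

lemma open_mapping_step2:
  fixes K :: "'a::chilbert_space \<Rightarrow> 'b::chilbert_space"
  assumes K: "bounded_clinear K" and cl: "closed (range K)"
  shows "\<exists>A>0. \<forall>y\<in>range K. \<exists>x. norm x \<le> A * norm y \<and> norm (y - K x) \<le> norm y / 2"
proof -
  interpret bl: bounded_linear K by (rule bcl_bounded_linear[OF K])
  obtain n r where r: "r > 0" and st: "\<forall>y\<in>range K. norm y < r \<longrightarrow> (\<forall>e>0. \<exists>x. norm x \<le> 2 * real n \<and> norm (K x - y) < e)"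
    using open_mapping_step1[OF K cl] by blast
  define A where "A = 4 * real n / r + 1"
  have A: "A > 0" using r by (simp add: A_def add_nonneg_pos)
  have "\<exists>x. norm x \<le> A * norm y \<and> norm (y - K x) \<le> norm y / 2" if yR: "y \<in> range K" for y
  proof (cases "y = 0")
    case True then show ?thesis by (intro exI[of _ 0]) simp
  next
    case False
    then have ny: "norm y > 0" by simp
    define t where "t = r / (2 * norm y)"
    have t: "t > 0" using r ny by (simp add: t_def)
    obtain xy where xy: "y = K xy" using yR by blast
    have tyR: "t *\<^sub>R y \<in> range K" using xy by (auto simp: bl.scaleR[symmetric])
    have tyr: "norm (t *\<^sub>R y) < r" using t ny r by (simp add: t_def)
    have r4: "r / 4 > 0" using r by simp
    obtain x' where x': "norm x' \<le> 2 * real n" "norm (K x' - t *\<^sub>R y) < r / 4"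
      using st[rule_format, OF tyR tyr r4] by blast
    define x where "x = (1 / t) *\<^sub>R x'"
    have "norm x = norm x' / t" using t by (simp add: x_def)
    also have "\<dots> \<le> 2 * real n / t" using x'(1) t by (simp add: divide_right_mono)
    also have "\<dots> = 4 * real n / r * norm y" using r ny by (simp add: t_def field_simps)
    also have "\<dots> \<le> A * norm y"
    proof -
      have "A * norm y = 4 * real n / r * norm y + norm y" by (simp add: A_def algebra_simps)
      then show ?thesis using ny by linarith
    qed
    finally have nx: "norm x \<le> A * norm y" .
    have "y - K x = (1 / t) *\<^sub>R (t *\<^sub>R y - K x')" using t by (simp add: x_def bl.scaleR scaleR_diff_right)
    then have "norm (y - K x) = norm (K x' - t *\<^sub>R y) / t" using t by (simp add: norm_minus_commute)
    also have "\<dots> \<le> (r / 4) / t" using divide_right_mono[of "norm (K x' - t *\<^sub>R y)" "r/4" t] x'(2) t by linarith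
    also have "\<dots> = norm y / 2" using r ny by (simp add: t_def field_simps)
    finally show ?thesis using nx by blast
  qed
  then show ?thesis using A by blast
qed

lemma open_mapping_closed_range:
  fixes K :: "'a::chilbert_space \<Rightarrow> 'b::chilbert_space"
  assumes K: "bounded_clinear K" and cl: "closed (range K)"
  shows "\<exists>C>0. \<forall>y\<in>range K. \<exists>x. K x = y \<and> norm x \<le> C * norm y"
proof -
  interpret bl: bounded_linear K by (rule bcl_bounded_linear[OF K])
  obtain A where A: "A > 0" and st: "\<forall>y\<in>range K. \<exists>x. norm x \<le> A * norm y \<and> norm (y - K x) \<le> norm y / 2"
    using open_mapping_step2[OF K cl] by blast
  have "\<forall>y. \<exists>x. y \<in> range K \<longrightarrow> norm x \<le> A * norm y \<and> norm (y - K x) \<le> norm y / 2"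
    using st by blast
  from choice[OF this] obtain g where g0: "\<forall>y. y \<in> range K \<longrightarrow> norm (g y) \<le> A * norm y \<and> norm (y - K (g y)) \<le> norm y / 2"
    by blast
  have g: "\<And>y. y \<in> range K \<Longrightarrow> norm (g y) \<le> A * norm y \<and> norm (y - K (g y)) \<le> norm y / 2"
    using g0 by blast
  have "\<exists>x. K x = y \<and> norm x \<le> (2 * A) * norm y" if yR: "y \<in> range K" for y
  proof -
    define res where "res = rec_nat y (\<lambda>_ r. r - K (g r))"
    have res0: "res 0 = y" by (simp add: res_def)
    have resS: "res (Suc k) = res k - K (g (res k))" for k by (simp add: res_def)
    have resR: "res k \<in> range K" for k
    proof (induction k)
      case 0 then show ?case using yR res0 by simp
    next
      case (Suc k)
      then obtain z where "res k = K z" by blast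
      then have "res (Suc k) = K (z - g (res k))" by (simp add: resS bl.diff)
      then show ?case by blast
    qed
    have resn: "norm (res k) \<le> norm y * (1/2) ^ k" for k
    proof (induction k)
      case 0 then show ?case by (simp add: res0)
    next
      case (Suc k)
      have "norm (res (Suc k)) \<le> norm (res k) / 2" using g[OF resR[of k]] by (simp add: resS)
      also have "\<dots> \<le> norm y * (1/2) ^ k / 2" using Suc by simp
      finally show ?case by simp
    qed
    define u where "u k = g (res k)" for k
    have un: "norm (u k) \<le> A * norm y * (1/2) ^ k" for k
    proof -
      have "norm (u k) \<le> A * norm (res k)" using g[OF resR[of k]] by (simp add: u_def)
      also have "\<dots> \<le> A * (norm y * (1/2) ^ k)" using A resn[of k] by (simp add: mult_left_mono)
      finally show ?thesis by (simp add: mult.assoc)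
    qed
    have sg: "summable (\<lambda>k. A * norm y * (1/2::real) ^ k)"
      by (intro summable_mult summable_geometric) simp
    have snu: "summable (\<lambda>k. norm (u k))"
      by (rule summable_comparison_test[OF _ sg]) (use un in auto)
    have su: "summable u" by (rule summable_norm_cancel[OF snu])
    define x where "x = suminf u"
    have "norm x \<le> (\<Sum>k. norm (u k))" unfolding x_def by (rule summable_norm[OF snu])
    also have "\<dots> \<le> (\<Sum>k. A * norm y * (1/2::real) ^ k)"
      by (rule suminf_le[OF _ snu sg]) (use un in auto)
    also have "\<dots> = A * norm y * 2"
      by (simp add: suminf_mult suminf_geometric[of "1/2::real"])
    finally have nx: "norm x \<le> (2 * A) * norm y" by simp
    have Kx: "K x = (\<Sum>k. K (u k))" unfolding x_def by (rule bl.suminf[OF su])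
    have ps: "(\<Sum>k<m. K (u k)) = y - res m" for m
      by (induction m) (simp_all add: res0 resS u_def)
    have "(\<lambda>m. res m) \<longlonglongrightarrow> 0"
    proof (rule Lim_null_comparison)
      show "\<forall>\<^sub>F m in sequentially. norm (res m) \<le> norm y * (1/2) ^ m" using resn by simp
      show "(\<lambda>m. norm y * (1/2::real) ^ m) \<longlonglongrightarrow> 0"
        by (intro tendsto_mult_right_zero LIMSEQ_power_zero) simp
    qed
    then have "(\<lambda>m. y - res m) \<longlonglongrightarrow> y - 0" by (intro tendsto_intros)
    then have sy: "(\<lambda>k. K (u k)) sums y" unfolding sums_def ps by simp
    have "K x = y" using Kx sums_unique[OF sy] by simp
    then show ?thesis using nx by blast
  qed
  moreover have "2 * A > 0" using A by simp
  ultimately show ?thesis by blast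
qed

lemma mp_unique:
  fixes K B1 B2 :: "'a::complex_inner \<Rightarrow> 'a"
  assumes a1: "K \<circ> B1 \<circ> K = K" "selfadjoint_op (K \<circ> B1)" "selfadjoint_op (B1 \<circ> K)"
    and a2: "K \<circ> B2 \<circ> K = K" "selfadjoint_op (K \<circ> B2)" "selfadjoint_op (B2 \<circ> K)"
    and a3: "B1 \<circ> K \<circ> B1 = B1" and a4: "B2 \<circ> K \<circ> B2 = B2"
  shows "B1 = B2"
proof -
  have k1: "K (B1 (K x)) = K x" for x using fun_cong[OF a1(1), of x] by simp
  have k2: "K (B2 (K x)) = K x" for x using fun_cong[OF a2(1), of x] by simp
  have s1: "cinner (K (B1 x)) y = cinner x (K (B1 y))" for x y using a1(2) by (simp add: selfadjoint_op_def)
  have s2: "cinner (K (B2 x)) y = cinner x (K (B2 y))" for x y using a2(2) by (simp add: selfadjoint_op_def)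
  have t1: "cinner (B1 (K x)) y = cinner x (B1 (K y))" for x y using a1(3) by (simp add: selfadjoint_op_def)
  have t2: "cinner (B2 (K x)) y = cinner x (B2 (K y))" for x y using a2(3) by (simp add: selfadjoint_op_def)
  have P: "K (B1 y) = K (B2 y)" for y
  proof (rule cinner_ext)
    fix h
    have "cinner (K (B1 y)) h = cinner (K (B2 (K (B1 y)))) h" by (simp add: k2)
    also have "\<dots> = cinner (K (B1 y)) (K (B2 h))" by (rule s2)
    also have "\<dots> = cinner y (K (B1 (K (B2 h))))" by (rule s1)
    also have "\<dots> = cinner y (K (B2 h))" by (simp add: k1)
    also have "\<dots> = cinner (K (B2 y)) h" by (simp add: s2)
    finally show "cinner (K (B1 y)) h = cinner (K (B2 y)) h" .
  qed
  have Q: "B1 (K x) = B2 (K x)" for x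
  proof (rule cinner_ext)
    fix h
    have "cinner (B1 (K x)) h = cinner (B1 (K (B2 (K x)))) h" by (simp add: k2)
    also have "\<dots> = cinner (B2 (K x)) (B1 (K h))" by (rule t1)
    also have "\<dots> = cinner x (B2 (K (B1 (K h))))" by (rule t2)
    also have "\<dots> = cinner x (B2 (K h))" by (simp add: k1)
    also have "\<dots> = cinner (B2 (K x)) h" by (simp add: t2)
    finally show "cinner (B1 (K x)) h = cinner (B2 (K x)) h" .
  qed
  have b1: "B1 (K (B1 y)) = B1 y" for y using fun_cong[OF a3, of y] by simp
  show ?thesis
  proof
    fix y
    have "B1 y = B1 (K (B1 y))" by (simp add: b1)
    also have "\<dots> = B2 (K (B1 y))" by (rule Q)
    also have "\<dots> = B2 (K (B2 y))" by (simp add: P)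
    also have "\<dots> = B2 y" using fun_cong[OF a4, of y] by simp
    finally show "B1 y = B2 y" .
  qed
qed

lemma mp_exists:
  fixes K :: "'a::chilbert_space \<Rightarrow> 'a"
  assumes K: "bounded_clinear K" and cl: "closed (range K)"
  shows "\<exists>J. bounded_clinear J \<and> K \<circ> J \<circ> K = K \<and> J \<circ> K \<circ> J = J \<and>
                       selfadjoint_op (K \<circ> J) \<and> selfadjoint_op (J \<circ> K)"
proof -
  interpret bl: bounded_linear K by (rule bcl_bounded_linear[OF K])
  define R where "R = range K"
  define N where "N = {x. K x = 0}"
  have cR: "csubspace R" unfolding csubspace_def R_def
    by (auto simp: bcl_add[OF K, symmetric] bcl_scaleC[OF K, symmetric] intro: bl.zero[symmetric])
  have clR: "closed R" using cl by (simp add: R_def)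
  have KR: "K x \<in> R" for x by (simp add: R_def)
  have cN: "csubspace N" unfolding csubspace_def N_def by (auto simp: bcl_add[OF K] bcl_scaleC[OF K])
  have clN: "closed N" unfolding N_def
    by (intro closed_Collect_eq continuous_on_const linear_continuous_on bl.bounded_linear_axioms)
  define Q where "Q x = x - proj N x" for x
  have KQ: "K (Q x) = K x" for x
  proof -
    have "K (proj N x) = 0" using proj_in[OF cN clN] by (simp add: N_def)
    then show ?thesis by (simp add: Q_def bl.diff)
  qed
  have QN: "cinner (Q x) s = 0" if "s \<in> N" for x s using proj_orth[OF cN clN that] by (simp add: Q_def)
  have uniq: "a = b" if "\<forall>s\<in>N. cinner a s = 0" "\<forall>s\<in>N. cinner b s = 0" "K a = K b" for a b
  proof -
    have "a - b \<in> N" using that(3) by (simp add: N_def bl.diff)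
    then have "cinner (a - b) (a - b) = 0" using that(1,2) by (simp add: cinner_diff_left)
    then show ?thesis by (simp add: cinner_self_eq_0)
  qed
  obtain C where C: "C > 0" "\<forall>y\<in>range K. \<exists>x. K x = y \<and> norm x \<le> C * norm y"
    using open_mapping_closed_range[OF K cl] by blast
  define pre where "pre y = (SOME x. K x = y \<and> norm x \<le> C * norm y)" for y
  have pre: "K (pre y) = y \<and> norm (pre y) \<le> C * norm y" if "y \<in> R" for y
    unfolding pre_def by (rule someI_ex) (use C that in \<open>auto simp: R_def\<close>)
  define J where "J y = Q (pre (proj R y))" for y
  have KJ: "K (J y) = proj R y" for y using pre[OF proj_in[OF cR clR]] by (simp add: J_def KQ)
  have JN: "\<forall>s\<in>N. cinner (J y) s = 0" for y by (simp add: J_def QN)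
  have Jadd: "J (a + b) = J a + J b" for a b
    by (rule uniq) (auto simp: JN cinner_add_left KJ bl.add proj_add[OF cR clR])
  have Jsc: "J (c *\<^sub>C a) = c *\<^sub>C J a" for c a
    by (rule uniq) (auto simp: JN cinner_scaleC_left KJ bcl_scaleC[OF K] proj_scaleC[OF cR clR])
  have Jbd: "norm (J y) \<le> norm y * C" for y
  proof -
    have "norm (J y) \<le> norm (pre (proj R y))" unfolding J_def Q_def by (rule compl_norm[OF cN clN])
    also have "\<dots> \<le> C * norm (proj R y)" using pre[OF proj_in[OF cR clR]] by blast
    also have "\<dots> \<le> C * norm y" using C(1) proj_norm[OF cR clR] by (simp add: mult_left_mono)
    finally show ?thesis by (simp add: mult.commute)
  qed
  have bJ: "bounded_clinear J" unfolding bounded_clinear_def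
    by (intro conjI allI exI[of _ C] Jadd Jsc Jbd)
  have KJK: "K \<circ> J \<circ> K = K"
  proof
    fix x show "(K \<circ> J \<circ> K) x = K x" using proj_id[OF cR clR KR] by (simp add: KJ)
  qed
  have JKJ: "J \<circ> K \<circ> J = J"
  proof
    fix y
    have "J (K (J y)) = J y"
      by (rule uniq) (auto simp: JN KJ proj_id[OF cR clR] proj_in[OF cR clR])
    then show "(J \<circ> K \<circ> J) y = J y" by simp
  qed
  have sa1: "selfadjoint_op (K \<circ> J)" unfolding selfadjoint_op_def
    by (simp add: KJ proj_selfadj[OF cR clR])
  have JKQ: "J (K x) = Q x" for x
    by (rule uniq) (auto simp: JN QN KJ KQ proj_id[OF cR clR KR])
  have sa2: "selfadjoint_op (J \<circ> K)" unfolding selfadjoint_op_def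
    by (simp add: JKQ Q_def compl_selfadj[OF cN clN])
  show ?thesis using bJ KJK JKJ sa1 sa2 by blast
qed

lemma mp_pinv_props:
  fixes K :: "'a::chilbert_space \<Rightarrow> 'a"
  assumes K: "bounded_clinear K" and cl: "closed (range K)"
  shows "bounded_clinear (mp_pinv K) \<and> K \<circ> mp_pinv K \<circ> K = K \<and> mp_pinv K \<circ> K \<circ> mp_pinv K = mp_pinv K \<and>
                       selfadjoint_op (K \<circ> mp_pinv K) \<and> selfadjoint_op (mp_pinv K \<circ> K)"
proof -
  let ?P = "\<lambda>B. bounded_clinear B \<and> K \<circ> B \<circ> K = K \<and> B \<circ> K \<circ> B = B \<and>
                       selfadjoint_op (K \<circ> B) \<and> selfadjoint_op (B \<circ> K)"
  have "\<exists>!B. ?P B"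
  proof (rule ex_ex1I)
    show "\<exists>B. ?P B" by (rule mp_exists[OF K cl])
    show "B1 = B2" if "?P B1" "?P B2" for B1 B2
      using that by (intro mp_unique[of K B1 B2]) auto
  qed
  then show ?thesis unfolding mp_pinv_def by (rule theI')
qed

definition sqi :: "'a measure \<Rightarrow> ('a \<Rightarrow> complex) \<Rightarrow> bool" where
  "sqi M c \<longleftrightarrow> c \<in> borel_measurable M \<and> (\<integral>\<^sup>+\<omega>. ennreal ((cmod (c \<omega>))\<^sup>2) \<partial>M) < \<infinity>"

lemma cmod_mult_le_sq: "cmod (a * b) \<le> (cmod a)\<^sup>2 + (cmod b)\<^sup>2"
proof -
  have "2 * (cmod a * cmod b) \<le> (cmod a)\<^sup>2 + (cmod b)\<^sup>2" using sum_squares_bound[of "cmod a" "cmod b"] by simp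
  moreover have "0 \<le> cmod a * cmod b" by simp
  moreover have "cmod (a * b) = cmod a * cmod b" by (simp add: norm_mult)
  ultimately show ?thesis by linarith
qed

lemma cmod_add_sq_le: "(cmod (a + b))\<^sup>2 \<le> 2 * (cmod a)\<^sup>2 + 2 * (cmod b)\<^sup>2"
proof -
  have "(cmod (a + b))\<^sup>2 \<le> (cmod a + cmod b)\<^sup>2" by (simp add: norm_triangle_ineq power_mono)
  also have "\<dots> \<le> 2 * (cmod a)\<^sup>2 + 2 * (cmod b)\<^sup>2" using sum_squares_bound[of "cmod a" "cmod b"]
    by (simp add: power2_sum)
  finally show ?thesis .
qed

lemma sqi_mult_integrable:
  assumes a: "sqi M a" and b: "sqi M b"
  shows "integrable M (\<lambda>\<omega>. a \<omega> * b \<omega>)"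
proof (rule integrableI_bounded)
  have [measurable]: "a \<in> borel_measurable M" "b \<in> borel_measurable M" using a b by (auto simp: sqi_def)
  show "(\<lambda>\<omega>. a \<omega> * b \<omega>) \<in> borel_measurable M" by measurable
  have "(\<integral>\<^sup>+\<omega>. ennreal (norm (a \<omega> * b \<omega>)) \<partial>M) \<le> (\<integral>\<^sup>+\<omega>. ennreal ((cmod (a \<omega>))\<^sup>2) + ennreal ((cmod (b \<omega>))\<^sup>2) \<partial>M)"
    by (intro nn_integral_mono) (simp add: ennreal_plus[symmetric] cmod_mult_le_sq del: ennreal_plus)
  also have "\<dots> = (\<integral>\<^sup>+\<omega>. ennreal ((cmod (a \<omega>))\<^sup>2) \<partial>M) + (\<integral>\<^sup>+\<omega>. ennreal ((cmod (b \<omega>))\<^sup>2) \<partial>M)"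
    using a b by (intro nn_integral_add) (auto simp: sqi_def)
  also have "\<dots> < \<infinity>" using a b by (simp add: sqi_def)
  finally show "(\<integral>\<^sup>+\<omega>. ennreal (norm (a \<omega> * b \<omega>)) \<partial>M) < \<infinity>" .
qed

lemma nn_sq_add_bound:
  assumes "a \<in> borel_measurable M" "b \<in> borel_measurable M"
  shows "(\<integral>\<^sup>+\<omega>. ennreal ((cmod (a \<omega> + b \<omega>))\<^sup>2) \<partial>M)
     \<le> 2 * (\<integral>\<^sup>+\<omega>. ennreal ((cmod (a \<omega>))\<^sup>2) \<partial>M) + 2 * (\<integral>\<^sup>+\<omega>. ennreal ((cmod (b \<omega>))\<^sup>2) \<partial>M)"
proof -
  have "(\<integral>\<^sup>+\<omega>. ennreal ((cmod (a \<omega> + b \<omega>))\<^sup>2) \<partial>M)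
     \<le> (\<integral>\<^sup>+\<omega>. 2 * ennreal ((cmod (a \<omega>))\<^sup>2) + 2 * ennreal ((cmod (b \<omega>))\<^sup>2) \<partial>M)"
  proof (intro nn_integral_mono)
    fix \<omega>
    have "ennreal ((cmod (a \<omega> + b \<omega>))\<^sup>2) \<le> ennreal (2 * (cmod (a \<omega>))\<^sup>2 + 2 * (cmod (b \<omega>))\<^sup>2)"
      by (rule ennreal_leI) (rule cmod_add_sq_le)
    also have "\<dots> = 2 * ennreal ((cmod (a \<omega>))\<^sup>2) + 2 * ennreal ((cmod (b \<omega>))\<^sup>2)"
      by (subst ennreal_plus) (auto simp: ennreal_mult)
    finally show "ennreal ((cmod (a \<omega> + b \<omega>))\<^sup>2) \<le> 2 * ennreal ((cmod (a \<omega>))\<^sup>2) + 2 * ennreal ((cmod (b \<omega>))\<^sup>2)" .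
  qed
  also have "\<dots> = (\<integral>\<^sup>+\<omega>. 2 * ennreal ((cmod (a \<omega>))\<^sup>2) \<partial>M) + (\<integral>\<^sup>+\<omega>. 2 * ennreal ((cmod (b \<omega>))\<^sup>2) \<partial>M)"
    using assms by (intro nn_integral_add) auto
  also have "\<dots> = 2 * (\<integral>\<^sup>+\<omega>. ennreal ((cmod (a \<omega>))\<^sup>2) \<partial>M) + 2 * (\<integral>\<^sup>+\<omega>. ennreal ((cmod (b \<omega>))\<^sup>2) \<partial>M)"
    using assms by (simp add: nn_integral_cmult)
  finally show ?thesis .
qed

lemma sqi_add: "sqi M a \<Longrightarrow> sqi M b \<Longrightarrow> sqi M (\<lambda>\<omega>. a \<omega> + b \<omega>)"
proof -
  assume a: "sqi M a" and b: "sqi M b"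
  have "(\<integral>\<^sup>+\<omega>. ennreal ((cmod (a \<omega> + b \<omega>))\<^sup>2) \<partial>M) \<le> 2 * (\<integral>\<^sup>+\<omega>. ennreal ((cmod (a \<omega>))\<^sup>2) \<partial>M) + 2 * (\<integral>\<^sup>+\<omega>. ennreal ((cmod (b \<omega>))\<^sup>2) \<partial>M)"
    using a b by (intro nn_sq_add_bound) (auto simp: sqi_def)
  also have "\<dots> < \<infinity>" using a b by (simp add: sqi_def ennreal_mult_less_top)
  finally have fin: "(\<integral>\<^sup>+\<omega>. ennreal ((cmod (a \<omega> + b \<omega>))\<^sup>2) \<partial>M) < \<infinity>" .
  moreover have "(\<lambda>\<omega>. a \<omega> + b \<omega>) \<in> borel_measurable M" using a b by (auto simp: sqi_def)
  ultimately show ?thesis by (simp add: sqi_def)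
qed

lemma sqi_cnj: "sqi M a \<Longrightarrow> sqi M (\<lambda>\<omega>. cnj (a \<omega>))"
proof -
  assume a: "sqi M a"
  then have [measurable]: "a \<in> borel_measurable M" by (simp add: sqi_def)
  have "cnj \<in> borel_measurable borel"
    by (intro borel_measurable_continuous_onI continuous_intros)
  then have "(\<lambda>\<omega>. cnj (a \<omega>)) \<in> borel_measurable M"
    using measurable_compose[of a M borel cnj borel] by (simp add: o_def)
  then show ?thesis using a by (simp add: sqi_def)
qed

lemma sqi_minus: "sqi M a \<Longrightarrow> sqi M (\<lambda>\<omega>. - a \<omega>)"
  by (simp add: sqi_def)

lemma sqi_diff: "sqi M a \<Longrightarrow> sqi M b \<Longrightarrow> sqi M (\<lambda>\<omega>. a \<omega> - b \<omega>)"
  using sqi_add[of M a "\<lambda>\<omega>. - b \<omega>"] sqi_minus[of M b] by simp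

lemma polar:
  fixes s t :: "'a::complex_vector \<Rightarrow> 'a \<Rightarrow> complex"
  assumes s1: "\<And>g1 g2 h. s (g1 + g2) h = s g1 h + s g2 h" and s2: "\<And>g h1 h2. s g (h1 + h2) = s g h1 + s g h2"
    and s3: "\<And>a g h. s (a *\<^sub>C g) h = a * s g h" and s4: "\<And>a g h. s g (a *\<^sub>C h) = cnj a * s g h"
    and t1: "\<And>g1 g2 h. t (g1 + g2) h = t g1 h + t g2 h" and t2: "\<And>g h1 h2. t g (h1 + h2) = t g h1 + t g h2"
    and t3: "\<And>a g h. t (a *\<^sub>C g) h = a * t g h" and t4: "\<And>a g h. t g (a *\<^sub>C h) = cnj a * t g h"
    and d: "\<And>f. s f f = t f f"
  shows "s g h = t g h"
proof -
  have e1: "s g h + s h g = t g h + t h g"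
    using d[of "g + h"] d[of g] d[of h] by (simp add: s1 s2 t1 t2 algebra_simps)
  have X: "s g g + ((- \<i>) * s g h + \<i> * s h g) + s h h = t g g + ((- \<i>) * t g h + \<i> * t h g) + t h h"
  proof -
    have "s (g + \<i> *\<^sub>C h) (g + \<i> *\<^sub>C h) = s g g + ((- \<i>) * s g h + \<i> * s h g) + s h h"
      by (simp add: s1 s2 s3 s4 algebra_simps)
    moreover have "t (g + \<i> *\<^sub>C h) (g + \<i> *\<^sub>C h) = t g g + ((- \<i>) * t g h + \<i> * t h g) + t h h"
      by (simp add: t1 t2 t3 t4 algebra_simps)
    ultimately show ?thesis using d[of "g + \<i> *\<^sub>C h"] by simp
  qed
  then have "(- \<i>) * s g h + \<i> * s h g = (- \<i>) * t g h + \<i> * t h g" using d[of g] d[of h] by simp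
  then have "\<i> * (s h g - s g h) = \<i> * (t h g - t g h)" by (simp add: algebra_simps)
  then have e2: "s h g - s g h = t h g - t g h" by simp
  have "2 * s g h = (s g h + s h g) - (s h g - s g h)" by simp
  also have "\<dots> = (t g h + t h g) - (t h g - t g h)" using e1 e2 by simp
  also have "\<dots> = 2 * t g h" by simp
  finally show ?thesis by simp
qed

lemma sqi_sq_integrable: "sqi M c \<Longrightarrow> integrable M (\<lambda>\<omega>. (cmod (c \<omega>))\<^sup>2)"
proof -
  assume c: "sqi M c"
  then have [measurable]: "c \<in> borel_measurable M" by (simp add: sqi_def)
  show ?thesis
  proof (rule integrableI_bounded)
    show "(\<lambda>\<omega>. (cmod (c \<omega>))\<^sup>2) \<in> borel_measurable M" by measurable
    show "(\<integral>\<^sup>+\<omega>. ennreal (norm ((cmod (c \<omega>))\<^sup>2)) \<partial>M) < \<infinity>" using c by (simp add: sqi_def)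
  qed
qed

lemma sqi_sq_integral: "sqi M c \<Longrightarrow> integral\<^sup>L M (\<lambda>\<omega>. (cmod (c \<omega>))\<^sup>2) = enn2real (\<integral>\<^sup>+\<omega>. ennreal ((cmod (c \<omega>))\<^sup>2) \<partial>M)"
proof -
  assume c: "sqi M c"
  then have [measurable]: "c \<in> borel_measurable M" by (simp add: sqi_def)
  show ?thesis by (rule integral_eq_nn_integral) auto
qed

lemma pf_meas: "parseval_cont_K_frame M K F \<Longrightarrow> (\<lambda>\<omega>. cinner f (F \<omega>)) \<in> borel_measurable M"
  by (simp add: parseval_cont_K_frame_def weakly_measurable_def)

lemma pf_sqi: "parseval_cont_K_frame M K F \<Longrightarrow> sqi M (\<lambda>\<omega>. cinner f (F \<omega>))"
  unfolding sqi_def using pf_meas[of M K F f] by (simp add: parseval_cont_K_frame_def)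

lemma pf_sqi': "parseval_cont_K_frame M K F \<Longrightarrow> sqi M (\<lambda>\<omega>. cinner (F \<omega>) h)"
  using sqi_cnj[OF pf_sqi[of M K F h]] by (simp add: cinner_commute[of "F _" h])

lemma pf_int: "parseval_cont_K_frame M K F \<Longrightarrow> integral\<^sup>L M (\<lambda>\<omega>. (cmod (cinner f (F \<omega>)))\<^sup>2) = (norm (cadjoint K f))\<^sup>2"
  using sqi_sq_integral[OF pf_sqi[of M K F f]] by (simp add: parseval_cont_K_frame_def)

lemma pf_polar:
  fixes K :: "'h::chilbert_space \<Rightarrow> 'h"
  assumes K: "bounded_clinear K" and P: "parseval_cont_K_frame M K F"
  shows "(\<integral>\<omega>. cinner g (F \<omega>) * cinner (F \<omega>) h \<partial>M) = cinner (cadjoint K g) (cadjoint K h)"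
proof (rule polar[where s="\<lambda>g h. \<integral>\<omega>. cinner g (F \<omega>) * cinner (F \<omega>) h \<partial>M"
                  and t="\<lambda>g h. cinner (cadjoint K g) (cadjoint K h)"])
  note int = sqi_mult_integrable[OF pf_sqi[OF P] pf_sqi'[OF P]]
  note Ks = cadjoint_bcl[OF K]
  show "(\<integral>\<omega>. cinner (g1 + g2) (F \<omega>) * cinner (F \<omega>) h \<partial>M) =
        (\<integral>\<omega>. cinner g1 (F \<omega>) * cinner (F \<omega>) h \<partial>M) + (\<integral>\<omega>. cinner g2 (F \<omega>) * cinner (F \<omega>) h \<partial>M)" for g1 g2 h
    by (simp add: cinner_add_left distrib_right int)
  show "(\<integral>\<omega>. cinner g (F \<omega>) * cinner (F \<omega>) (h1 + h2) \<partial>M) =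
        (\<integral>\<omega>. cinner g (F \<omega>) * cinner (F \<omega>) h1 \<partial>M) + (\<integral>\<omega>. cinner g (F \<omega>) * cinner (F \<omega>) h2 \<partial>M)" for g h1 h2
    by (simp add: cinner_add_right distrib_left int)
  show "(\<integral>\<omega>. cinner (a *\<^sub>C g) (F \<omega>) * cinner (F \<omega>) h \<partial>M) = a * (\<integral>\<omega>. cinner g (F \<omega>) * cinner (F \<omega>) h \<partial>M)" for a g h
    by (simp add: cinner_scaleC_left mult.assoc)
  show "(\<integral>\<omega>. cinner g (F \<omega>) * cinner (F \<omega>) (a *\<^sub>C h) \<partial>M) = cnj a * (\<integral>\<omega>. cinner g (F \<omega>) * cinner (F \<omega>) h \<partial>M)" for a g h
    by (simp add: cinner_scaleC_right mult.left_commute)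
  show "cinner (cadjoint K (g1 + g2)) (cadjoint K h) = cinner (cadjoint K g1) (cadjoint K h) + cinner (cadjoint K g2) (cadjoint K h)" for g1 g2 h
    by (simp add: bcl_add[OF Ks] cinner_add_left)
  show "cinner (cadjoint K g) (cadjoint K (h1 + h2)) = cinner (cadjoint K g) (cadjoint K h1) + cinner (cadjoint K g) (cadjoint K h2)" for g h1 h2
    by (simp add: bcl_add[OF Ks] cinner_add_right)
  show "cinner (cadjoint K (a *\<^sub>C g)) (cadjoint K h) = a * cinner (cadjoint K g) (cadjoint K h)" for a g h
    by (simp add: bcl_scaleC[OF Ks] cinner_scaleC_left)
  show "cinner (cadjoint K g) (cadjoint K (a *\<^sub>C h)) = cnj a * cinner (cadjoint K g) (cadjoint K h)" for a g h
    by (simp add: bcl_scaleC[OF Ks] cinner_scaleC_right)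
  show "(\<integral>\<omega>. cinner f (F \<omega>) * cinner (F \<omega>) f \<partial>M) = cinner (cadjoint K f) (cadjoint K f)" for f
  proof -
    have "cinner f (F \<omega>) * cinner (F \<omega>) f = complex_of_real ((cmod (cinner f (F \<omega>)))\<^sup>2)" for \<omega>
      by (metis cinner_commute complex_norm_square)
    then have "(\<integral>\<omega>. cinner f (F \<omega>) * cinner (F \<omega>) f \<partial>M) = complex_of_real (integral\<^sup>L M (\<lambda>\<omega>. (cmod (cinner f (F \<omega>)))\<^sup>2))"
      by (simp only: Bochner_Integration.integral_complex_of_real[symmetric])
    also have "\<dots> = complex_of_real ((norm (cadjoint K f))\<^sup>2)" by (simp only: pf_int[OF P])
    also have "\<dots> = cinner (cadjoint K f) (cadjoint K f)" by (simp only: cinner_self)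
    finally show ?thesis .
  qed
qed

lemma synth_unique:
  fixes F :: "'a \<Rightarrow> 'h::chilbert_space"
  assumes "\<And>h. cinner x h = (\<integral>\<omega>. c \<omega> * cinner (F \<omega>) h \<partial>M)"
  shows "synth_op M F c = x"
  unfolding synth_op_def
proof (rule the_equality)
  show "\<forall>h. cinner x h = (\<integral>\<omega>. c \<omega> * cinner (F \<omega>) h \<partial>M)" using assms by blast
  show "y = x" if "\<forall>h. cinner y h = (\<integral>\<omega>. c \<omega> * cinner (F \<omega>) h \<partial>M)" for y
    using that assms by (intro cinner_ext) simp
qed

lemma mult_bound_t:
  fixes a b t :: real
  assumes "t > 0" "a \<ge> 0" "b \<ge> 0"
  shows "a * b \<le> t * a\<^sup>2 + b\<^sup>2 / t"
proof -
  have "0 \<le> (t * a - b)\<^sup>2" by simp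
  then have "2 * t * a * b \<le> t\<^sup>2 * a\<^sup>2 + b\<^sup>2" by (simp add: power2_eq_square algebra_simps)
  then have "2 * (a * b) \<le> t * a\<^sup>2 + b\<^sup>2 / t" using assms(1)
    by (simp add: field_simps power2_eq_square)
  moreover have "0 \<le> a * b" using assms by simp
  ultimately show ?thesis by linarith
qed

lemma synth_exists:
  fixes K :: "'h::chilbert_space \<Rightarrow> 'h"
  assumes K: "bounded_clinear K" and P: "parseval_cont_K_frame M K F" and c: "sqi M c"
  shows "cinner (synth_op M F c) h = (\<integral>\<omega>. c \<omega> * cinner (F \<omega>) h \<partial>M)"
proof -
  note int = sqi_mult_integrable[OF c pf_sqi'[OF P]]
  obtain cK where cK: "cK > 0" "\<forall>x. norm (cadjoint K x) \<le> norm x * cK" using bcl_bound[OF cadjoint_bcl[OF K]] by blast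
  define A where "A = integral\<^sup>L M (\<lambda>\<omega>. (cmod (c \<omega>))\<^sup>2)"
  define L where "L x = cnj (\<integral>\<omega>. c \<omega> * cinner (F \<omega>) x \<partial>M)" for x
  have "\<exists>z. \<forall>x. L x = cinner x z"
  proof (rule riesz)
    show "L (x + y) = L x + L y" for x y
      by (simp add: L_def cinner_add_right distrib_left int)
    show "L (a *\<^sub>C x) = a * L x" for a x
      by (simp add: L_def cinner_scaleC_right mult.left_commute)
    show "cmod (L x) \<le> norm x * (A + cK\<^sup>2)" for x
    proof (cases "x = 0")
      case True then show ?thesis by (simp add: L_def)
    next
      case False
      define t where "t = norm x"
      have t: "t > 0" using False by (simp add: t_def)
      have "cmod (L x) = norm (\<integral>\<omega>. c \<omega> * cinner (F \<omega>) x \<partial>M)" by (simp add: L_def)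
      also have "\<dots> \<le> (\<integral>\<omega>. norm (c \<omega> * cinner (F \<omega>) x) \<partial>M)" by (rule integral_norm_bound)
      also have "\<dots> \<le> (\<integral>\<omega>. t * (cmod (c \<omega>))\<^sup>2 + (cmod (cinner x (F \<omega>)))\<^sup>2 / t \<partial>M)"
      proof (rule integral_mono)
        show "integrable M (\<lambda>\<omega>. norm (c \<omega> * cinner (F \<omega>) x))" using int by simp
        show "integrable M (\<lambda>\<omega>. t * (cmod (c \<omega>))\<^sup>2 + (cmod (cinner x (F \<omega>)))\<^sup>2 / t)"
          using sqi_sq_integrable[OF c] sqi_sq_integrable[OF pf_sqi[OF P, of x]] by simp
        fix \<omega>
        have "cmod (cinner (F \<omega>) x) = cmod (cinner x (F \<omega>))" by (metis cinner_commute complex_mod_cnj)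
        then show "norm (c \<omega> * cinner (F \<omega>) x) \<le> t * (cmod (c \<omega>))\<^sup>2 + (cmod (cinner x (F \<omega>)))\<^sup>2 / t"
          using mult_bound_t[OF t, of "cmod (c \<omega>)" "cmod (cinner x (F \<omega>))"] by (simp add: norm_mult)
      qed
      also have "\<dots> = t * A + (norm (cadjoint K x))\<^sup>2 / t"
        using sqi_sq_integrable[OF c] sqi_sq_integrable[OF pf_sqi[OF P, of x]]
        by (simp add: A_def pf_int[OF P])
      also have "\<dots> \<le> t * A + (t * cK)\<^sup>2 / t"
        using cK t by (intro add_left_mono divide_right_mono power_mono) (auto simp: t_def)
      also have "\<dots> = norm x * (A + cK\<^sup>2)" using t by (simp add: t_def power2_eq_square field_simps)
      finally show ?thesis .
    qed
  qed
  then obtain z where z: "\<And>x. L x = cinner x z" by blast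
  have "synth_op M F c = z"
  proof (rule synth_unique)
    fix h
    have "cinner z h = cnj (cinner h z)" by (rule cinner_commute)
    also have "\<dots> = cnj (L h)" by (simp add: z)
    also have "\<dots> = (\<integral>\<omega>. c \<omega> * cinner (F \<omega>) h \<partial>M)" by (simp add: L_def)
    finally show "cinner z h = (\<integral>\<omega>. c \<omega> * cinner (F \<omega>) h \<partial>M)" .
  qed
  then show ?thesis by (simp add: z[symmetric] L_def cinner_commute[of z h])
qed

lemma enn_bound2:
  fixes X Y :: ennreal
  assumes "X \<le> ennreal x" "Y \<le> ennreal y" "0 \<le> x" "0 \<le> y"
  shows "2 * X + 2 * Y \<le> ennreal (2 * x + 2 * y)"
proof -
  have "ennreal (2 * x + 2 * y) = 2 * ennreal x + 2 * ennreal y"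
    using assms by (subst ennreal_plus) (auto simp: ennreal_mult)
  moreover have "2 * X + 2 * Y \<le> 2 * ennreal x + 2 * ennreal y"
    using assms by (intro add_mono mult_left_mono) auto
  ultimately show ?thesis by simp
qed

lemma frame_aux:
  fixes K :: "'h::chilbert_space \<Rightarrow> 'h"
  assumes K: "bounded_clinear K" and cl: "closed (range K)"
  shows "bounded_clinear (mp_pinv K)" "K (cadjoint K (cadjoint (mp_pinv K) f)) = K f"
    "cinner f (mp_pinv K x) = cinner (cadjoint (mp_pinv K) f) x"
    "\<exists>c>0. \<forall>f. norm (cadjoint K (cadjoint (mp_pinv K) f)) \<le> norm f * c"
proof -
  define J where "J = mp_pinv K"
  have pr: "bounded_clinear J \<and> K \<circ> J \<circ> K = K \<and> J \<circ> K \<circ> J = J \<and>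
                       selfadjoint_op (K \<circ> J) \<and> selfadjoint_op (J \<circ> K)"
    unfolding J_def by (rule mp_pinv_props[OF K cl])
  then have bJ: "bounded_clinear J" by blast
  then show "bounded_clinear (mp_pinv K)" by (simp add: J_def)
  have KJK: "K (J (K x)) = K x" for x using pr by (metis comp_apply)
  have sa: "cinner (J (K x)) y = cinner x (J (K y))" for x y using pr by (simp add: selfadjoint_op_def)
  have JKKs: "J (K (cadjoint K x)) = cadjoint K x" for x
  proof (rule cinner_ext)
    fix y
    have "cinner (J (K (cadjoint K x))) y = cinner (cadjoint K x) (J (K y))" by (rule sa)
    also have "\<dots> = cinner x (K (J (K y)))" by (rule cadjoint_prop'[OF K])
    also have "\<dots> = cinner x (K y)" by (simp add: KJK)
    also have "\<dots> = cinner (cadjoint K x) y" by (rule cadjoint_prop'[OF K, symmetric])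
    finally show "cinner (J (K (cadjoint K x))) y = cinner (cadjoint K x) y" .
  qed
  show "K (cadjoint K (cadjoint (mp_pinv K) f)) = K f"
    unfolding J_def[symmetric]
  proof (rule cinner_ext)
    fix h
    have "cinner (K (cadjoint K (cadjoint J f))) h = cinner (cadjoint K (cadjoint J f)) (cadjoint K h)"
      by (rule cadjoint_prop[OF K])
    also have "\<dots> = cinner (cadjoint J f) (K (cadjoint K h))" by (rule cadjoint_prop'[OF K])
    also have "\<dots> = cinner f (J (K (cadjoint K h)))" by (rule cadjoint_prop'[OF bJ])
    also have "\<dots> = cinner f (cadjoint K h)" by (simp add: JKKs)
    also have "\<dots> = cinner (K f) h" by (rule cadjoint_prop[OF K, symmetric])
    finally show "cinner (K (cadjoint K (cadjoint J f))) h = cinner (K f) h" .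
  qed
  show "cinner f (mp_pinv K x) = cinner (cadjoint (mp_pinv K) f) x"
    unfolding J_def[symmetric] by (rule cadjoint_prop'[OF bJ, symmetric])
  obtain c1 where c1: "c1 > 0" "\<forall>x. norm (cadjoint K x) \<le> norm x * c1" using bcl_bound[OF cadjoint_bcl[OF K]] by blast
  obtain c2 where c2: "c2 > 0" "\<forall>x. norm (cadjoint J x) \<le> norm x * c2" using bcl_bound[OF cadjoint_bcl[OF bJ]] by blast
  have "norm (cadjoint K (cadjoint J f)) \<le> norm f * (c2 * c1)" for f
  proof -
    have "norm (cadjoint K (cadjoint J f)) \<le> norm (cadjoint J f) * c1" using c1 by blast
    also have "\<dots> \<le> norm f * c2 * c1" using c2 c1 by (simp add: mult_right_mono)
    finally show ?thesis by (simp add: mult.assoc)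
  qed
  then show "\<exists>c>0. \<forall>f. norm (cadjoint K (cadjoint (mp_pinv K) f)) \<le> norm f * c"
    using c1 c2 unfolding J_def by (intro exI[of _ "c2 * c1"]) auto
qed

theorem lemma3p3:
  fixes M :: "'a measure" and K :: "'h::chilbert_space \<Rightarrow> 'h" and F G :: "'a \<Rightarrow> 'h"
  assumes "bounded_clinear K"
    and "closed (range K)"
    and "parseval_cont_K_frame M K F"
    and "weakly_measurable M G"
  shows "dual_cont_K_bessel M K F G \<longleftrightarrow>
    (\<exists>\<phi>. bounded_to_L2 M \<phi> \<and> (\<forall>f. synth_op M F (\<phi> f) = 0) \<and>
         (\<forall>f. \<forall>\<omega>\<in>space M. \<phi> f \<omega> = cinner f (G \<omega> - mp_pinv K (F \<omega>))))"
proof -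
  note K = assms(1) and cl = assms(2) and P = assms(3) and WG = assms(4)
  define J where "J = mp_pinv K"
  define Ks where "Ks = cadjoint K"
  define Js where "Js = cadjoint J"
  note aux = frame_aux[OF K cl, folded J_def Ks_def, folded Js_def]
  have key: "K (Ks (Js f)) = K f" for f by (rule aux(2))
  have cJ: "cinner f (J x) = cinner (Js f) x" for f x by (rule aux(3))
  obtain c0 where c0: "c0 > 0" "\<forall>f. norm (Ks (Js f)) \<le> norm f * c0" using aux(4) by blast
  have Gm: "(\<lambda>\<omega>. cinner f (G \<omega>)) \<in> borel_measurable M" for f using WG by (simp add: weakly_measurable_def)
  have phieq: "cinner f (G \<omega> - J (F \<omega>)) = cinner f (G \<omega>) - cinner (Js f) (F \<omega>)" for f \<omega>
    by (simp add: cinner_diff_right cJ)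
  have polar: "(\<integral>\<omega>. cinner (Js f) (F \<omega>) * cinner (F \<omega>) h \<partial>M) = cinner (K f) h" for f h
  proof -
    have "(\<integral>\<omega>. cinner (Js f) (F \<omega>) * cinner (F \<omega>) h \<partial>M) = cinner (Ks (Js f)) (Ks h)"
      unfolding Ks_def by (rule pf_polar[OF K P])
    also have "\<dots> = cinner (K (Ks (Js f))) h" unfolding Ks_def by (rule cadjoint_prop[OF K, symmetric])
    also have "\<dots> = cinner (K f) h" by (simp add: key)
    finally show ?thesis .
  qed
  have pfnn: "(\<integral>\<^sup>+\<omega>. ennreal ((cmod (cinner (Js f) (F \<omega>)))\<^sup>2) \<partial>M) \<le> ennreal ((norm f * c0)\<^sup>2)" for f
  proof -
    have "(\<integral>\<^sup>+\<omega>. ennreal ((cmod (cinner (Js f) (F \<omega>)))\<^sup>2) \<partial>M) = ennreal ((norm (Ks (Js f)))\<^sup>2)"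
      using P by (simp add: parseval_cont_K_frame_def Ks_def)
    also have "\<dots> \<le> ennreal ((norm f * c0)\<^sup>2)" using c0 by (intro ennreal_leI power_mono) auto
    finally show ?thesis .
  qed
  have pfm: "(\<lambda>\<omega>. cinner (Js f) (F \<omega>)) \<in> borel_measurable M" for f by (rule pf_meas[OF P])
  show ?thesis
  proof
    assume D: "dual_cont_K_bessel M K F G"
    then obtain B where B: "B > 0" "\<forall>f. (\<integral>\<^sup>+ \<omega>. ennreal ((cmod (cinner f (G \<omega>)))\<^sup>2) \<partial>M) \<le> ennreal (B * (norm f)\<^sup>2)"
      by (auto simp: dual_cont_K_bessel_def cont_bessel_def)
    have Kdual: "K f = synth_op M F (\<lambda>\<omega>. cinner f (G \<omega>))" for f using D by (simp add: dual_cont_K_bessel_def)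
    have sG: "sqi M (\<lambda>\<omega>. cinner f (G \<omega>))" for f
    proof -
      have "(\<integral>\<^sup>+ \<omega>. ennreal ((cmod (cinner f (G \<omega>)))\<^sup>2) \<partial>M) < \<infinity>"
        using B(2)[rule_format, of f] by (simp add: order_le_less_trans)
      then show ?thesis using Gm by (simp add: sqi_def)
    qed
    define \<phi> where "\<phi> f \<omega> = cinner f (G \<omega> - J (F \<omega>))" for f \<omega>
    have phi: "\<phi> f = (\<lambda>\<omega>. cinner f (G \<omega>) - cinner (Js f) (F \<omega>))" for f by (rule ext) (simp add: \<phi>_def phieq)
    have bL2: "bounded_to_L2 M \<phi>"
      unfolding bounded_to_L2_def
    proof (intro conjI allI)
      show "\<phi> f \<in> borel_measurable M" for f unfolding phi using Gm pfm by (intro borel_measurable_diff) auto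
      show "AE \<omega> in M. \<phi> (f + g) \<omega> = \<phi> f \<omega> + \<phi> g \<omega>" for f g by (simp add: \<phi>_def cinner_add_left)
      show "AE \<omega> in M. \<phi> (c *\<^sub>C f) \<omega> = c * \<phi> f \<omega>" for c f by (simp add: \<phi>_def cinner_scaleC_left)
      define C where "C = sqrt (2 * B + 2 * c0\<^sup>2)"
      show "\<exists>C. \<forall>f. (\<integral>\<^sup>+ \<omega>. ennreal ((cmod (\<phi> f \<omega>))\<^sup>2) \<partial>M) \<le> ennreal ((C * norm f)\<^sup>2)"
      proof (intro exI allI)
        fix f
        have "(\<integral>\<^sup>+ \<omega>. ennreal ((cmod (\<phi> f \<omega>))\<^sup>2) \<partial>M)
            = (\<integral>\<^sup>+ \<omega>. ennreal ((cmod (cinner f (G \<omega>) + - cinner (Js f) (F \<omega>)))\<^sup>2) \<partial>M)"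
          by (simp add: phi)
        also have "\<dots> \<le> 2 * (\<integral>\<^sup>+ \<omega>. ennreal ((cmod (cinner f (G \<omega>)))\<^sup>2) \<partial>M)
                      + 2 * (\<integral>\<^sup>+ \<omega>. ennreal ((cmod (- cinner (Js f) (F \<omega>)))\<^sup>2) \<partial>M)"
          using Gm pfm by (intro nn_sq_add_bound) auto
        also have "\<dots> \<le> ennreal (2 * (B * (norm f)\<^sup>2) + 2 * (norm f * c0)\<^sup>2)"
          using B(2)[rule_format, of f] pfnn[of f] B(1) by (intro enn_bound2) auto
        also have "\<dots> = ennreal ((C * norm f)\<^sup>2)"
          using B(1) by (simp add: C_def power_mult_distrib algebra_simps)
        finally show "(\<integral>\<^sup>+ \<omega>. ennreal ((cmod (\<phi> f \<omega>))\<^sup>2) \<partial>M) \<le> ennreal ((C * norm f)\<^sup>2)" .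
      qed
    qed
    have S0: "synth_op M F (\<phi> f) = 0" for f
    proof (rule synth_unique)
      fix h
      have i1: "integrable M (\<lambda>\<omega>. cinner f (G \<omega>) * cinner (F \<omega>) h)"
        by (rule sqi_mult_integrable[OF sG pf_sqi'[OF P]])
      have i2: "integrable M (\<lambda>\<omega>. cinner (Js f) (F \<omega>) * cinner (F \<omega>) h)"
        by (rule sqi_mult_integrable[OF pf_sqi[OF P] pf_sqi'[OF P]])
      have "(\<integral>\<omega>. \<phi> f \<omega> * cinner (F \<omega>) h \<partial>M)
          = (\<integral>\<omega>. cinner f (G \<omega>) * cinner (F \<omega>) h - cinner (Js f) (F \<omega>) * cinner (F \<omega>) h \<partial>M)"
        by (simp add: phi left_diff_distrib)
      also have "\<dots> = (\<integral>\<omega>. cinner f (G \<omega>) * cinner (F \<omega>) h \<partial>M) - (\<integral>\<omega>. cinner (Js f) (F \<omega>) * cinner (F \<omega>) h \<partial>M)"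
        by (rule Bochner_Integration.integral_diff[OF i1 i2])
      also have "(\<integral>\<omega>. cinner f (G \<omega>) * cinner (F \<omega>) h \<partial>M) = cinner (K f) h"
        using synth_exists[OF K P sG, of f h] Kdual[of f] by simp
      finally show "cinner 0 h = (\<integral>\<omega>. \<phi> f \<omega> * cinner (F \<omega>) h \<partial>M)" by (simp add: polar)
    qed
    show "\<exists>\<phi>. bounded_to_L2 M \<phi> \<and> (\<forall>f. synth_op M F (\<phi> f) = 0) \<and>
         (\<forall>f. \<forall>\<omega>\<in>space M. \<phi> f \<omega> = cinner f (G \<omega> - mp_pinv K (F \<omega>)))"
      using bL2 S0 by (intro exI[of _ \<phi>]) (simp add: \<phi>_def J_def)
  next
    assume "\<exists>\<phi>. bounded_to_L2 M \<phi> \<and> (\<forall>f. synth_op M F (\<phi> f) = 0) \<and>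
         (\<forall>f. \<forall>\<omega>\<in>space M. \<phi> f \<omega> = cinner f (G \<omega> - mp_pinv K (F \<omega>)))"
    then obtain \<phi> where bL2: "bounded_to_L2 M \<phi>" and S0: "\<And>f. synth_op M F (\<phi> f) = 0"
      and E: "\<And>f \<omega>. \<omega> \<in> space M \<Longrightarrow> \<phi> f \<omega> = cinner f (G \<omega> - J (F \<omega>))"
      unfolding J_def by blast
    have E': "cinner f (G \<omega>) = \<phi> f \<omega> + cinner (Js f) (F \<omega>)" if "\<omega> \<in> space M" for f \<omega>
      using E[OF that, of f] by (simp add: phieq)
    have phim: "\<phi> f \<in> borel_measurable M" for f using bL2 by (simp add: bounded_to_L2_def)
    obtain C where C: "\<And>f. (\<integral>\<^sup>+ \<omega>. ennreal ((cmod (\<phi> f \<omega>))\<^sup>2) \<partial>M) \<le> ennreal ((C * norm f)\<^sup>2)"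
      using bL2 by (auto simp: bounded_to_L2_def)
    have sphi: "sqi M (\<phi> f)" for f
    proof -
      have "(\<integral>\<^sup>+ \<omega>. ennreal ((cmod (\<phi> f \<omega>))\<^sup>2) \<partial>M) < \<infinity>"
        using C[of f] by (simp add: order_le_less_trans)
      then show ?thesis using phim by (simp add: sqi_def)
    qed
    define B where "B = 2 * C\<^sup>2 + 2 * c0\<^sup>2 + 1"
    have B0: "B > 0" by (simp add: B_def add_nonneg_pos)
    have bes: "(\<integral>\<^sup>+ \<omega>. ennreal ((cmod (cinner f (G \<omega>)))\<^sup>2) \<partial>M) \<le> ennreal (B * (norm f)\<^sup>2)" for f
    proof -
      have "(\<integral>\<^sup>+ \<omega>. ennreal ((cmod (cinner f (G \<omega>)))\<^sup>2) \<partial>M)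
          = (\<integral>\<^sup>+ \<omega>. ennreal ((cmod (\<phi> f \<omega> + cinner (Js f) (F \<omega>)))\<^sup>2) \<partial>M)"
        by (intro nn_integral_cong) (simp add: E')
      also have "\<dots> \<le> 2 * (\<integral>\<^sup>+ \<omega>. ennreal ((cmod (\<phi> f \<omega>))\<^sup>2) \<partial>M)
                      + 2 * (\<integral>\<^sup>+ \<omega>. ennreal ((cmod (cinner (Js f) (F \<omega>)))\<^sup>2) \<partial>M)"
        using phim pfm by (intro nn_sq_add_bound) auto
      also have "\<dots> \<le> ennreal (2 * (C * norm f)\<^sup>2 + 2 * (norm f * c0)\<^sup>2)"
        using C[of f] pfnn[of f] by (intro enn_bound2) auto
      also have "\<dots> \<le> ennreal (B * (norm f)\<^sup>2)"
        by (intro ennreal_leI) (simp add: B_def power_mult_distrib algebra_simps)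
      finally show ?thesis .
    qed
    have cb: "cont_bessel M G" unfolding cont_bessel_def using WG B0 bes by blast
    have "K f = synth_op M F (\<lambda>\<omega>. cinner f (G \<omega>))" for f
    proof (rule synth_unique[symmetric])
      fix h
      have i1: "integrable M (\<lambda>\<omega>. \<phi> f \<omega> * cinner (F \<omega>) h)"
        by (rule sqi_mult_integrable[OF sphi pf_sqi'[OF P]])
      have i2: "integrable M (\<lambda>\<omega>. cinner (Js f) (F \<omega>) * cinner (F \<omega>) h)"
        by (rule sqi_mult_integrable[OF pf_sqi[OF P] pf_sqi'[OF P]])
      have "(\<integral>\<omega>. cinner f (G \<omega>) * cinner (F \<omega>) h \<partial>M)
          = (\<integral>\<omega>. \<phi> f \<omega> * cinner (F \<omega>) h + cinner (Js f) (F \<omega>) * cinner (F \<omega>) h \<partial>M)"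
        by (intro Bochner_Integration.integral_cong) (simp_all add: E' distrib_right)
      also have "\<dots> = (\<integral>\<omega>. \<phi> f \<omega> * cinner (F \<omega>) h \<partial>M) + (\<integral>\<omega>. cinner (Js f) (F \<omega>) * cinner (F \<omega>) h \<partial>M)"
        by (rule Bochner_Integration.integral_add[OF i1 i2])
      also have "(\<integral>\<omega>. \<phi> f \<omega> * cinner (F \<omega>) h \<partial>M) = cinner (synth_op M F (\<phi> f)) h"
        by (rule synth_exists[OF K P sphi, symmetric])
      finally show "cinner (K f) h = (\<integral>\<omega>. cinner f (G \<omega>) * cinner (F \<omega>) h \<partial>M)" by (simp add: S0 polar)
    qed
    then show "dual_cont_K_bessel M K F G" using cb by (simp add: dual_cont_K_bessel_def)
  qed
qed

end
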